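(* Let $r\in\mathbb{N}\setminus\{0\}$ and \[ G=\left\langle a_1,\ldots,a_r,t_1,\ldots,t_r \;\middle|\; a_ia_j=a_ja_i,\ t_it_j=t_jt_i,\ t_i^2=1,\ t_i^{-1}a_jt_i=\begin{cases}a_j & i\neq j\\ a_i^{-1} & i=j\end{cases}\ (1\le i,j\le r)\right\rangle . \] Then $G$ is virtually abelian of rank $r$, its automorphic growth satisfies $\alpha_G\sim(n\mapsto n^r)$, and $[G,G]=\langle a_1^2,\ldots,a_r^2\rangle$.
   Context: For a finitely generated group $G$ with finite generating set $\Sigma$, the automorphic growth function sends $n$ to the number of $\operatorname{Aut}(G)$-orbits of $G$ containing an element of word length at most $n$; $\alpha_G$ denotes its class under $\sim$, where $f\sim g$ iff $f\preccurlyeq g$ and $g\preccurlyeq f$, and $f\preccurlyeq g$ means there is $\lambda\in\mathbb{N}\setminus\{0\}$ with $f(n)\le\lambda g(\lambda n+\lambda)+\lambda$ for all $n$. The rank of a virtually abelian group is the rank of a finite-index free abelian subgroup. *)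

theory Defs
  imports "HOL-Algebra.Algebra"
begin

text \<open>A letter is a generator together with a flag; flag True means the inverse of the generator.\<close>
type_synonym 'g word = "('g \<times> bool) list"

definition inv_letter :: "'g \<times> bool \<Rightarrow> 'g \<times> bool" where
  "inv_letter x = (fst x, \<not> snd x)"

definition words_on :: "'g set \<Rightarrow> 'g word set" where
  "words_on S = {w. \<forall>x\<in>set w. fst x \<in> S}"

inductive pres_eq :: "'g set \<Rightarrow> ('g word \<times> 'g word) set \<Rightarrow> 'g word \<Rightarrow> 'g word \<Rightarrow> bool"
  for S R where
  refl: "w \<in> words_on S \<Longrightarrow> pres_eq S R w w"
| sym: "pres_eq S R u v \<Longrightarrow> pres_eq S R v u"
| trans: "pres_eq S R u v \<Longrightarrow> pres_eq S R v w \<Longrightarrow> pres_eq S R u w"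
| cancel: "u \<in> words_on S \<Longrightarrow> v \<in> words_on S \<Longrightarrow> fst x \<in> S \<Longrightarrow>
      pres_eq S R (u @ [x, inv_letter x] @ v) (u @ v)"
| rel: "(l, r) \<in> R \<Longrightarrow> l \<in> words_on S \<Longrightarrow> r \<in> words_on S \<Longrightarrow>
      u \<in> words_on S \<Longrightarrow> v \<in> words_on S \<Longrightarrow> pres_eq S R (u @ l @ v) (u @ r @ v)"

definition presented_group :: "'g set \<Rightarrow> ('g word \<times> 'g word) set \<Rightarrow> 'g word set monoid" where
  "presented_group S R =
     \<lparr> carrier = (\<lambda>w. {v. pres_eq S R w v}) ` words_on S,
       monoid.mult = (\<lambda>A B. {w. \<exists>u\<in>A. \<exists>v\<in>B. pres_eq S R (u @ v) w}),
       one = {w. pres_eq S R [] w} \<rparr>"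

definition pres_gen :: "'g set \<Rightarrow> ('g word \<times> 'g word) set \<Rightarrow> 'g \<Rightarrow> 'g word set" where
  "pres_gen S R g = {w. pres_eq S R [(g, False)] w}"

text \<open>Generators: (False, i) is a_i and (True, i) is t_i, for 1 \<le> i \<le> r.\<close>
definition gens :: "nat \<Rightarrow> (bool \<times> nat) set" where
  "gens r = UNIV \<times> {1..r}"

definition la :: "nat \<Rightarrow> (bool \<times> nat) \<times> bool" where "la i = ((False, i), False)"
definition la_inv :: "nat \<Rightarrow> (bool \<times> nat) \<times> bool" where "la_inv i = ((False, i), True)"
definition lt :: "nat \<Rightarrow> (bool \<times> nat) \<times> bool" where "lt i = ((True, i), False)"
definition lt_inv :: "nat \<Rightarrow> (bool \<times> nat) \<times> bool" where "lt_inv i = ((True, i), True)"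

definition rels :: "nat \<Rightarrow> ((bool \<times> nat) word \<times> (bool \<times> nat) word) set" where
  "rels r =
     {([la i, la j], [la j, la i]) | i j. i \<in> {1..r} \<and> j \<in> {1..r}}
   \<union> {([lt i, lt j], [lt j, lt i]) | i j. i \<in> {1..r} \<and> j \<in> {1..r}}
   \<union> {([lt i, lt i], []) | i. i \<in> {1..r}}
   \<union> {([lt_inv i, la j, lt i], (if i \<noteq> j then [la j] else [la_inv i])) | i j.
        i \<in> {1..r} \<and> j \<in> {1..r}}"

definition Gr :: "nat \<Rightarrow> (bool \<times> nat) word set monoid" where
  "Gr r = presented_group (gens r) (rels r)"

definition gen_a :: "nat \<Rightarrow> nat \<Rightarrow> (bool \<times> nat) word set" where
  "gen_a r i = pres_gen (gens r) (rels r) (False, i)"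

definition word_length :: "('a, 'b) monoid_scheme \<Rightarrow> 'a set \<Rightarrow> 'a \<Rightarrow> nat" where
  "word_length G \<Sigma> g =
     (LEAST n. \<exists>xs. length xs = n \<and> set xs \<subseteq> \<Sigma> \<union> (m_inv G ` \<Sigma>) \<and>
                    foldr (\<lambda>x y. x \<otimes>\<^bsub>G\<^esub> y) xs \<one>\<^bsub>G\<^esub> = g)"

definition aut_orbit :: "('a, 'b) monoid_scheme \<Rightarrow> 'a \<Rightarrow> 'a set" where
  "aut_orbit G g = (\<lambda>\<phi>. \<phi> g) ` iso G G"

definition aut_growth :: "('a, 'b) monoid_scheme \<Rightarrow> 'a set \<Rightarrow> nat \<Rightarrow> nat" where
  "aut_growth G \<Sigma> n =
     card {aut_orbit G g | g. g \<in> carrier G \<and> word_length G \<Sigma> g \<le> n}"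

definition growth_le :: "(nat \<Rightarrow> nat) \<Rightarrow> (nat \<Rightarrow> nat) \<Rightarrow> bool" where
  "growth_le f g \<longleftrightarrow> (\<exists>c::nat. c > 0 \<and> (\<forall>n. f n \<le> c * g (c * n + c) + c))"

definition growth_equiv :: "(nat \<Rightarrow> nat) \<Rightarrow> (nat \<Rightarrow> nat) \<Rightarrow> bool" where
  "growth_equiv f g \<longleftrightarrow> growth_le f g \<and> growth_le g f"

definition virtually_abelian_rank :: "('a, 'b) monoid_scheme \<Rightarrow> nat \<Rightarrow> bool" where
  "virtually_abelian_rank G r \<longleftrightarrow>
     (\<exists>H. subgroup H G \<and> finite (rcosets\<^bsub>G\<^esub> H) \<and>
          G\<lparr>carrier := H\<rparr> \<cong> free_Abelian_group {..<r})"

end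

theory Submission
  imports Defs
begin

lemma words_on_append [simp]: "(u @ v \<in> words_on S) = (u \<in> words_on S \<and> v \<in> words_on S)"
  by (auto simp: words_on_def)

lemma words_on_Cons [simp]: "(x # v \<in> words_on S) = (fst x \<in> S \<and> v \<in> words_on S)"
  by (auto simp: words_on_def)

lemma words_on_Nil [simp]: "[] \<in> words_on S"
  by (auto simp: words_on_def)

lemma fst_inv_letter [simp]: "fst (inv_letter x) = fst x"
  by (simp add: inv_letter_def)

lemma inv_letter_inv_letter [simp]: "inv_letter (inv_letter x) = x"
  by (simp add: inv_letter_def)

lemma pres_eq_words: "pres_eq S R u v \<Longrightarrow> u \<in> words_on S \<and> v \<in> words_on S"
  by (induction rule: pres_eq.induct) auto

lemma pres_eq_cong_left:
  assumes "pres_eq S R u v" "w \<in> words_on S"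
  shows "pres_eq S R (w @ u) (w @ v)"
  using assms
proof (induction rule: pres_eq.induct)
  case (refl u) then show ?case by (auto intro: pres_eq.refl)
next
  case (sym u v) then show ?case by (auto intro: pres_eq.sym)
next
  case (trans u v x) then show ?case by (meson pres_eq.trans)
next
  case (cancel u v x)
  then show ?case using pres_eq.cancel[of "w @ u" S v x R] by simp
next
  case (rel l r u v)
  then show ?case using pres_eq.rel[of l r R S "w @ u" v] by simp
qed

lemma pres_eq_cong_right:
  assumes "pres_eq S R u v" "w \<in> words_on S"
  shows "pres_eq S R (u @ w) (v @ w)"
  using assms
proof (induction rule: pres_eq.induct)
  case (refl u) then show ?case by (auto intro: pres_eq.refl)
next
  case (sym u v) then show ?case by (auto intro: pres_eq.sym)
next
  case (trans u v x) then show ?case by (meson pres_eq.trans)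
next
  case (cancel u v x)
  then show ?case using pres_eq.cancel[of u S "v @ w" x R] by simp
next
  case (rel l r u v)
  then show ?case using pres_eq.rel[of l r R S u "v @ w"] by simp
qed

lemma pres_eq_app:
  assumes "pres_eq S R u u'" "pres_eq S R v v'"
  shows "pres_eq S R (u @ v) (u' @ v')"
proof -
  have "pres_eq S R (u @ v) (u' @ v)"
    using assms pres_eq_cong_right pres_eq_words by blast
  moreover have "pres_eq S R (u' @ v) (u' @ v')"
    using assms pres_eq_cong_left pres_eq_words by blast
  ultimately show ?thesis by (rule pres_eq.trans)
qed

definition cls :: "'g set \<Rightarrow> ('g word \<times> 'g word) set \<Rightarrow> 'g word \<Rightarrow> 'g word set" where
  "cls S R w = {v. pres_eq S R w v}"

lemma cls_eq_iff:
  assumes "u \<in> words_on S"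
  shows "cls S R u = cls S R v \<longleftrightarrow> pres_eq S R u v"
proof
  assume "cls S R u = cls S R v"
  moreover have "u \<in> cls S R u" using assms by (simp add: cls_def pres_eq.refl)
  ultimately have "pres_eq S R v u" by (simp add: cls_def)
  then show "pres_eq S R u v" by (rule pres_eq.sym)
next
  assume "pres_eq S R u v"
  then show "cls S R u = cls S R v"
    unfolding cls_def by (auto intro: pres_eq.trans pres_eq.sym)
qed

lemma carrier_pg: "carrier (presented_group S R) = cls S R ` words_on S"
  by (simp add: presented_group_def cls_def[abs_def])

lemma one_pg: "\<one>\<^bsub>presented_group S R\<^esub> = cls S R []"
  by (simp add: presented_group_def cls_def)

lemma mult_pg:
  assumes "u \<in> words_on S" "v \<in> words_on S"
  shows "cls S R u \<otimes>\<^bsub>presented_group S R\<^esub> cls S R v = cls S R (u @ v)"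
proof -
  have "{w. \<exists>u'\<in>cls S R u. \<exists>v'\<in>cls S R v. pres_eq S R (u' @ v') w} = cls S R (u @ v)"
  proof safe
    fix w u' v' assume "u' \<in> cls S R u" "v' \<in> cls S R v" "pres_eq S R (u' @ v') w"
    then show "w \<in> cls S R (u @ v)"
      unfolding cls_def by (auto intro: pres_eq.trans pres_eq_app)
  next
    fix w assume "w \<in> cls S R (u @ v)"
    then show "\<exists>u'\<in>cls S R u. \<exists>v'\<in>cls S R v. pres_eq S R (u' @ v') w"
      using assms by (auto simp: cls_def intro!: bexI[of _ u] bexI[of _ v] pres_eq.refl)
  qed
  then show ?thesis by (simp add: presented_group_def)
qed

definition invw :: "'g word \<Rightarrow> 'g word" where
  "invw w = rev (map inv_letter w)"

lemma invw_words [simp]: "(invw w \<in> words_on S) = (w \<in> words_on S)"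
  by (auto simp: invw_def words_on_def)

lemma invw_cancel: "w \<in> words_on S \<Longrightarrow> pres_eq S R (invw w @ w) []"
proof (induction w)
  case Nil then show ?case by (simp add: invw_def pres_eq.refl)
next
  case (Cons x w)
  have "pres_eq S R (invw w @ [inv_letter x, inv_letter (inv_letter x)] @ w) (invw w @ w)"
    using Cons.prems by (intro pres_eq.cancel) auto
  then have "pres_eq S R (invw (x # w) @ x # w) (invw w @ w)"
    by (simp add: invw_def)
  then show ?case using Cons by (auto intro: pres_eq.trans)
qed

lemma group_pg: "group (presented_group S R)"
proof (rule groupI)
  fix x y assume "x \<in> carrier (presented_group S R)" "y \<in> carrier (presented_group S R)"
  then show "x \<otimes>\<^bsub>presented_group S R\<^esub> y \<in> carrier (presented_group S R)"
    by (auto simp: carrier_pg mult_pg)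
next
  show "\<one>\<^bsub>presented_group S R\<^esub> \<in> carrier (presented_group S R)"
    by (auto simp: carrier_pg one_pg)
next
  fix x y z assume "x \<in> carrier (presented_group S R)" "y \<in> carrier (presented_group S R)"
    "z \<in> carrier (presented_group S R)"
  then show "x \<otimes>\<^bsub>presented_group S R\<^esub> y \<otimes>\<^bsub>presented_group S R\<^esub> z =
       x \<otimes>\<^bsub>presented_group S R\<^esub> (y \<otimes>\<^bsub>presented_group S R\<^esub> z)"
    by (auto simp: carrier_pg mult_pg)
next
  fix x assume "x \<in> carrier (presented_group S R)"
  then show "\<one>\<^bsub>presented_group S R\<^esub> \<otimes>\<^bsub>presented_group S R\<^esub> x = x"
    by (auto simp: carrier_pg mult_pg one_pg)
next
  fix x assume "x \<in> carrier (presented_group S R)"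
  then obtain w where w: "w \<in> words_on S" "x = cls S R w" by (auto simp: carrier_pg)
  show "\<exists>y\<in>carrier (presented_group S R). y \<otimes>\<^bsub>presented_group S R\<^esub> x = \<one>\<^bsub>presented_group S R\<^esub>"
  proof (intro bexI)
    show "cls S R (invw w) \<in> carrier (presented_group S R)" using w by (simp add: carrier_pg)
    show "cls S R (invw w) \<otimes>\<^bsub>presented_group S R\<^esub> x = \<one>\<^bsub>presented_group S R\<^esub>"
      using w by (simp add: mult_pg one_pg cls_eq_iff invw_cancel)
  qed
qed


type_synonym elt = "(nat \<Rightarrow> int) \<times> (nat \<Rightarrow> bool)"

definition carM :: "nat \<Rightarrow> elt set" where
  "carM r = {p. \<forall>i. i \<notin> {1..r} \<longrightarrow> fst p i = 0 \<and> \<not> snd p i}"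

definition mulM :: "elt \<Rightarrow> elt \<Rightarrow> elt" where
  "mulM p q = (\<lambda>i. fst p i + (if snd p i then - fst q i else fst q i), \<lambda>i. snd p i \<noteq> snd q i)"

definition oneM :: elt where "oneM = (\<lambda>_. 0, \<lambda>_. False)"

definition invM :: "elt \<Rightarrow> elt" where
  "invM p = (\<lambda>i. if snd p i then fst p i else - fst p i, snd p)"

definition evl :: "(bool \<times> nat) \<times> bool \<Rightarrow> elt" where
  "evl x = (if fst (fst x) then (\<lambda>_. 0, \<lambda>j. j = snd (fst x))
            else (\<lambda>j. if j = snd (fst x) then (if snd x then -1 else 1) else 0, \<lambda>_. False))"

definition evw :: "(bool \<times> nat) word \<Rightarrow> elt" where
  "evw w = foldr (\<lambda>x acc. mulM (evl x) acc) w oneM"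

lemma mulM_assoc: "mulM (mulM p q) s = mulM p (mulM q s)"
  by (auto simp: mulM_def fun_eq_iff)

lemma mulM_one [simp]: "mulM oneM p = p" "mulM p oneM = p"
  by (auto simp: mulM_def oneM_def prod_eq_iff)

lemma mulM_invM [simp]: "mulM p (invM p) = oneM" "mulM (invM p) p = oneM"
  by (auto simp: mulM_def oneM_def invM_def fun_eq_iff)

lemma carM_mulM [simp]: "p \<in> carM r \<Longrightarrow> q \<in> carM r \<Longrightarrow> mulM p q \<in> carM r"
  by (auto simp: carM_def mulM_def)

lemma carM_invM [simp]: "p \<in> carM r \<Longrightarrow> invM p \<in> carM r"
  by (auto simp: carM_def invM_def)

lemma carM_oneM [simp]: "oneM \<in> carM r"
  by (auto simp: carM_def oneM_def)

lemma evw_Nil [simp]: "evw [] = oneM" by (simp add: evw_def)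
lemma evw_Cons [simp]: "evw (x # w) = mulM (evl x) (evw w)" by (simp add: evw_def)

lemma evw_append [simp]: "evw (u @ v) = mulM (evw u) (evw v)"
  by (induction u) (auto simp: mulM_assoc)

lemma evl_carM: "fst x \<in> gens r \<Longrightarrow> evl x \<in> carM r"
  by (auto simp: evl_def carM_def gens_def)

lemma evw_carM: "w \<in> words_on (gens r) \<Longrightarrow> evw w \<in> carM r"
  by (induction w) (auto simp: evl_carM)

lemma evw_cancel: "mulM (evl x) (evl (inv_letter x)) = oneM"
  by (auto simp: evl_def inv_letter_def mulM_def oneM_def fun_eq_iff)

lemma evw_rels: "(l, r') \<in> rels r \<Longrightarrow> evw l = evw r'"
  unfolding rels_def
  by (auto simp: la_def la_inv_def lt_def lt_inv_def evl_def mulM_def oneM_def fun_eq_iff)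

lemma pres_eq_evw: "pres_eq (gens r) (rels r) u v \<Longrightarrow> evw u = evw v"
proof (induction rule: pres_eq.induct)
  case (cancel u v x)
  then show ?case by (simp add: mulM_assoc[symmetric] evw_cancel)
next
  case (rel l r' u v)
  then show ?case using evw_rels[of l r' r] by simp
qed auto

definition Phi :: "(bool \<times> nat) word set \<Rightarrow> elt" where
  "Phi A = evw (SOME w. w \<in> A)"

abbreviation cl where "cl r \<equiv> cls (gens r) (rels r)"

lemma Phi_cl: "w \<in> words_on (gens r) \<Longrightarrow> Phi (cl r w) = evw w"
proof -
  assume w: "w \<in> words_on (gens r)"
  then have "w \<in> cl r w" by (simp add: cls_def pres_eq.refl)
  then have "(SOME v. v \<in> cl r w) \<in> cl r w" by (rule someI)
  then show ?thesis unfolding Phi_def cls_def using pres_eq_evw by (metis mem_Collect_eq)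
qed

lemma carrier_Gr: "carrier (Gr r) = cl r ` words_on (gens r)"
  by (simp add: Gr_def carrier_pg)

lemma group_Gr: "group (Gr r)"
  by (simp add: Gr_def group_pg)

lemma mult_Gr: "u \<in> words_on (gens r) \<Longrightarrow> v \<in> words_on (gens r) \<Longrightarrow>
   cl r u \<otimes>\<^bsub>Gr r\<^esub> cl r v = cl r (u @ v)"
  by (simp add: Gr_def mult_pg)

lemma one_Gr: "\<one>\<^bsub>Gr r\<^esub> = cl r []"
  by (simp add: Gr_def one_pg)

lemma Phi_carM: "x \<in> carrier (Gr r) \<Longrightarrow> Phi x \<in> carM r"
  by (auto simp: carrier_Gr Phi_cl evw_carM)

lemma Phi_mult: "x \<in> carrier (Gr r) \<Longrightarrow> y \<in> carrier (Gr r) \<Longrightarrow>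
   Phi (x \<otimes>\<^bsub>Gr r\<^esub> y) = mulM (Phi x) (Phi y)"
  by (auto simp: carrier_Gr mult_Gr Phi_cl)

lemma Phi_one: "Phi \<one>\<^bsub>Gr r\<^esub> = oneM"
  by (simp add: one_Gr Phi_cl)

lemma invM_unique: "mulM p q = oneM \<Longrightarrow> q = invM p"
proof -
  assume a: "mulM p q = oneM"
  have "\<And>i. fst (mulM p q) i = fst oneM i" "\<And>i. snd (mulM p q) i = snd oneM i" using a by auto
  then have h0: "\<And>i. fst p i + (if snd p i then - fst q i else fst q i) = 0" and h2: "\<And>i. snd p i = snd q i"
    by (auto simp: mulM_def oneM_def)
  have h1: "\<And>i. fst q i = (if snd p i then fst p i else - fst p i)"
  proof -
    fix i show "fst q i = (if snd p i then fst p i else - fst p i)"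
      using h0[of i] by (cases "snd p i") auto
  qed
  show ?thesis using h1 h2
    by (simp add: invM_def prod_eq_iff fun_eq_iff)
qed

lemma Phi_inv: "x \<in> carrier (Gr r) \<Longrightarrow> Phi (inv\<^bsub>Gr r\<^esub> x) = invM (Phi x)"
proof -
  assume x: "x \<in> carrier (Gr r)"
  interpret group "Gr r" by (rule group_Gr)
  have "mulM (Phi x) (Phi (inv\<^bsub>Gr r\<^esub> x)) = oneM"
    using x by (simp add: Phi_mult[symmetric] Phi_one)
  then show ?thesis by (rule invM_unique)
qed


lemma (in group) commute_nat_pow:
  assumes "x \<in> carrier G" "a \<in> carrier G" "b \<in> carrier G" "x \<otimes> a = b \<otimes> x"
  shows "x \<otimes> a [^] (n::nat) = b [^] n \<otimes> x"
proof (induction n)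
  case 0 then show ?case using assms by simp
next
  case (Suc n)
  have "x \<otimes> a [^] Suc n = (x \<otimes> a [^] n) \<otimes> a" using assms by (simp add: m_assoc)
  also have "\<dots> = b [^] n \<otimes> (x \<otimes> a)" using Suc assms by (simp add: m_assoc)
  also have "\<dots> = b [^] Suc n \<otimes> x" using assms by (simp add: m_assoc)
  finally show ?case .
qed

lemma (in group) commute_int_pow:
  assumes "x \<in> carrier G" "a \<in> carrier G" "b \<in> carrier G" "x \<otimes> a = b \<otimes> x"
  shows "x \<otimes> a [^] (z::int) = b [^] z \<otimes> x"
proof (cases "z \<ge> 0")
  case True
  then show ?thesis using commute_nat_pow[OF assms, of "nat z"]
    by (metis int_pow_int nat_0_le)
next
  case False
  have "inv b \<otimes> x = x \<otimes> inv a"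
  proof -
    have xa: "x \<otimes> a \<otimes> inv a = x" using assms(1,2) by (simp add: m_assoc)
    have "inv b \<otimes> x = inv b \<otimes> (x \<otimes> a \<otimes> inv a)" using xa by simp
    also have "\<dots> = inv b \<otimes> (x \<otimes> a) \<otimes> inv a" using assms(1-3) by (simp add: m_assoc)
    also have "\<dots> = inv b \<otimes> (b \<otimes> x) \<otimes> inv a" using assms(4) by simp
    also have "\<dots> = x \<otimes> inv a"
    proof -
      have "inv b \<otimes> (b \<otimes> x) = x" using assms(1-3) by (simp add: m_assoc[symmetric])
      then show ?thesis by simp
    qed
    finally show ?thesis .
  qed
  then have "x \<otimes> inv a [^] (nat (-z)) = inv b [^] (nat (-z)) \<otimes> x"
    using commute_nat_pow[of x "inv a" "inv b"] assms by simp
  moreover have "a [^] z = inv a [^] (nat (-z))"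
  proof -
    have "z = - int (nat (-z))" using False by simp
    then have "a [^] z = inv (a [^] nat (-z))" using int_pow_neg_int[OF assms(2)] by metis
    also have "\<dots> = inv a [^] (nat (-z))" using assms(2) by (rule nat_pow_inv[symmetric])
    finally show ?thesis .
  qed
  moreover have "b [^] z = inv b [^] (nat (-z))"
  proof -
    have "z = - int (nat (-z))" using False by simp
    then have "b [^] z = inv (b [^] nat (-z))" using int_pow_neg_int[OF assms(3)] by metis
    also have "\<dots> = inv b [^] (nat (-z))" using assms(3) by (rule nat_pow_inv[symmetric])
    finally show ?thesis .
  qed
  ultimately show ?thesis by simp
qed

locale Dr = group G for G :: "(bool \<times> nat) word set monoid" (structure) +
  fixes r :: nat
  assumes G_def: "G = Gr r"
begin

definition alpha :: "nat \<Rightarrow> (bool \<times> nat) word set" where "alpha i = cl r [la i]"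
definition tau :: "nat \<Rightarrow> (bool \<times> nat) word set" where "tau i = cl r [lt i]"

lemma carrier_G: "carrier G = cl r ` words_on (gens r)"
  by (simp add: G_def carrier_Gr)

lemma cl_carrier: "w \<in> words_on (gens r) \<Longrightarrow> cl r w \<in> carrier G"
  by (simp add: carrier_G)

lemma mult_cl: "u \<in> words_on (gens r) \<Longrightarrow> v \<in> words_on (gens r) \<Longrightarrow> cl r u \<otimes> cl r v = cl r (u @ v)"
  by (simp add: G_def mult_Gr)

lemma one_cl: "\<one> = cl r []"
  by (simp add: G_def one_Gr)

lemma letters_words [simp]:
  "i \<in> {1..r} \<Longrightarrow> [la i] \<in> words_on (gens r)"
  "i \<in> {1..r} \<Longrightarrow> [la_inv i] \<in> words_on (gens r)"
  "i \<in> {1..r} \<Longrightarrow> [lt i] \<in> words_on (gens r)"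
  "i \<in> {1..r} \<Longrightarrow> [lt_inv i] \<in> words_on (gens r)"
  by (auto simp: words_on_def la_def la_inv_def lt_def lt_inv_def gens_def)

lemma fst_letters [simp]: "fst (la i) = (False, i)" "fst (la_inv i) = (False, i)"
  "fst (lt i) = (True, i)" "fst (lt_inv i) = (True, i)"
  by (simp_all add: la_def la_inv_def lt_def lt_inv_def)

lemma gens_mem [simp]: "((b, i) \<in> gens r) = (1 \<le> i \<and> i \<le> r)"
  by (auto simp: gens_def)

lemma letters_words' [simp]:
  "Suc 0 \<le> i \<Longrightarrow> i \<le> r \<Longrightarrow> [la i] \<in> words_on (gens r)"
  "Suc 0 \<le> i \<Longrightarrow> i \<le> r \<Longrightarrow> [la_inv i] \<in> words_on (gens r)"
  "Suc 0 \<le> i \<Longrightarrow> i \<le> r \<Longrightarrow> [lt i] \<in> words_on (gens r)"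
  "Suc 0 \<le> i \<Longrightarrow> i \<le> r \<Longrightarrow> [lt_inv i] \<in> words_on (gens r)"
  by (auto simp: words_on_def la_def la_inv_def lt_def lt_inv_def gens_def)

lemma alpha_carrier [simp]: "i \<in> {1..r} \<Longrightarrow> alpha i \<in> carrier G"
  unfolding alpha_def by (intro cl_carrier letters_words)

lemma tau_carrier [simp]: "i \<in> {1..r} \<Longrightarrow> tau i \<in> carrier G"
  unfolding tau_def by (intro cl_carrier letters_words)

lemma rel_cl: "(l, r') \<in> rels r \<Longrightarrow> l \<in> words_on (gens r) \<Longrightarrow> r' \<in> words_on (gens r) \<Longrightarrow> cl r l = cl r r'"
  using pres_eq.rel[of l r' "rels r" "gens r" "[]" "[]"] by (simp add: cls_eq_iff)

lemma alpha_comm: "i \<in> {1..r} \<Longrightarrow> j \<in> {1..r} \<Longrightarrow> alpha i \<otimes> alpha j = alpha j \<otimes> alpha i"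
proof -
  assume ij: "i \<in> {1..r}" "j \<in> {1..r}"
  then have "([la i, la j], [la j, la i]) \<in> rels r" by (auto simp: rels_def)
  then have "cl r [la i, la j] = cl r [la j, la i]"
    using ij letters_words by (intro rel_cl) (auto simp: words_on_def)
  then show ?thesis using ij by (simp add: alpha_def mult_cl)
qed

lemma tau_comm: "i \<in> {1..r} \<Longrightarrow> j \<in> {1..r} \<Longrightarrow> tau i \<otimes> tau j = tau j \<otimes> tau i"
proof -
  assume ij: "i \<in> {1..r}" "j \<in> {1..r}"
  then have "([lt i, lt j], [lt j, lt i]) \<in> rels r" by (auto simp: rels_def)
  then have "cl r [lt i, lt j] = cl r [lt j, lt i]"
    using ij letters_words by (intro rel_cl) (auto simp: words_on_def)
  then show ?thesis using ij by (simp add: tau_def mult_cl)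
qed

lemma tau_sq: "i \<in> {1..r} \<Longrightarrow> tau i \<otimes> tau i = \<one>"
proof -
  assume ij: "i \<in> {1..r}"
  then have "([lt i, lt i], []) \<in> rels r" by (auto simp: rels_def)
  then have "cl r [lt i, lt i] = cl r []"
    using ij letters_words by (intro rel_cl) (auto simp: words_on_def)
  then show ?thesis using ij by (simp add: tau_def mult_cl one_cl)
qed

lemma inv_tau: "i \<in> {1..r} \<Longrightarrow> inv (tau i) = tau i"
  using tau_sq by (simp add: inv_equality)

lemma cl_la_inv: "i \<in> {1..r} \<Longrightarrow> cl r [la_inv i] = inv (alpha i)"
proof -
  assume i: "i \<in> {1..r}"
  have "pres_eq (gens r) (rels r) ([] @ [la i, inv_letter (la i)] @ []) ([] @ [])"
    using i by (intro pres_eq.cancel) (auto simp: la_def gens_def)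
  then have "cl r [la i, la_inv i] = cl r []"
    using i by (subst cls_eq_iff) (auto simp: la_def la_inv_def inv_letter_def gens_def)
  then have "alpha i \<otimes> cl r [la_inv i] = \<one>"
    using i by (simp add: alpha_def mult_cl one_cl)
  then show ?thesis using i by (metis alpha_carrier cl_carrier inv_equality letters_words(2) inv_comm)
qed

lemma cl_lt_inv: "i \<in> {1..r} \<Longrightarrow> cl r [lt_inv i] = tau i"
proof -
  assume i: "i \<in> {1..r}"
  have "pres_eq (gens r) (rels r) ([] @ [lt i, inv_letter (lt i)] @ []) ([] @ [])"
    using i by (intro pres_eq.cancel) (auto simp: lt_def gens_def)
  then have "cl r [lt i, lt_inv i] = cl r []"
    using i by (subst cls_eq_iff) (auto simp: lt_def lt_inv_def inv_letter_def gens_def)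
  then have "tau i \<otimes> cl r [lt_inv i] = \<one>"
    using i by (simp add: tau_def mult_cl one_cl)
  then have "cl r [lt_inv i] = inv (tau i)"
    using i by (metis tau_carrier cl_carrier inv_equality letters_words(4) inv_comm)
  then show ?thesis using i inv_tau by simp
qed

lemma tau_alpha: "i \<in> {1..r} \<Longrightarrow> j \<in> {1..r} \<Longrightarrow>
   tau i \<otimes> alpha j = (if i = j then inv (alpha i) else alpha j) \<otimes> tau i"
proof -
  assume ij: "i \<in> {1..r}" "j \<in> {1..r}"
  then have "([lt_inv i, la j, lt i], (if i \<noteq> j then [la j] else [la_inv i])) \<in> rels r"
    by (auto simp: rels_def)
  then have "cl r [lt_inv i, la j, lt i] = cl r (if i \<noteq> j then [la j] else [la_inv i])"
    using ij letters_words by (intro rel_cl) (auto simp: words_on_def)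
  then have "cl r [lt_inv i] \<otimes> cl r [la j] \<otimes> cl r [lt i] = (if i = j then inv (alpha i) else alpha j)"
    using ij by (simp add: mult_cl cl_la_inv alpha_def)
  then have e: "tau i \<otimes> alpha j \<otimes> tau i = (if i = j then inv (alpha i) else alpha j)"
    using ij by (simp add: cl_lt_inv alpha_def tau_def)
  have "tau i \<otimes> alpha j = tau i \<otimes> alpha j \<otimes> tau i \<otimes> tau i"
    using ij by (simp add: m_assoc tau_sq)
  then show ?thesis using e by simp
qed

end


context Dr
begin

definition Awl :: "nat list \<Rightarrow> (nat \<Rightarrow> int) \<Rightarrow> (bool \<times> nat) word set" where
  "Awl l k = foldr (\<lambda>j acc. alpha j [^] k j \<otimes> acc) l \<one>"

definition Twl :: "nat list \<Rightarrow> (nat \<Rightarrow> bool) \<Rightarrow> (bool \<times> nat) word set" where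
  "Twl l e = foldr (\<lambda>j acc. (if e j then tau j else \<one>) \<otimes> acc) l \<one>"

definition ixs :: "nat list" where "ixs = [1..<Suc r]"

lemma set_ixs [simp]: "set ixs = {1..r}" unfolding ixs_def by (simp only: set_upt) auto
lemma distinct_ixs [simp]: "distinct ixs" by (simp add: ixs_def)

definition Psi :: "elt \<Rightarrow> (bool \<times> nat) word set" where
  "Psi p = Awl ixs (fst p) \<otimes> Twl ixs (snd p)"

lemma Awl_Nil [simp]: "Awl [] k = \<one>" by (simp add: Awl_def)
lemma Awl_Cons [simp]: "Awl (j # l) k = alpha j [^] k j \<otimes> Awl l k" by (simp add: Awl_def)
lemma Twl_Nil [simp]: "Twl [] e = \<one>" by (simp add: Twl_def)
lemma Twl_Cons [simp]: "Twl (j # l) e = (if e j then tau j else \<one>) \<otimes> Twl l e" by (simp add: Twl_def)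

lemma Awl_carrier [simp]: "set l \<subseteq> {1..r} \<Longrightarrow> Awl l k \<in> carrier G"
  by (induction l) auto

lemma Twl_carrier [simp]: "set l \<subseteq> {1..r} \<Longrightarrow> Twl l e \<in> carrier G"
  by (induction l) auto

lemma Psi_carrier [simp]: "Psi p \<in> carrier G"
  by (simp add: Psi_def)

lemma Awl_cong: "(\<And>j. j \<in> set l \<Longrightarrow> k j = k' j) \<Longrightarrow> Awl l k = Awl l k'"
  by (induction l) auto

lemma Twl_cong: "(\<And>j. j \<in> set l \<Longrightarrow> e j = e' j) \<Longrightarrow> Twl l e = Twl l e'"
  by (induction l) auto

lemma Awl_zero: "set l \<subseteq> {1..r} \<Longrightarrow> Awl l (\<lambda>_. 0) = \<one>"
  by (induction l) auto

lemma Twl_False: "set l \<subseteq> {1..r} \<Longrightarrow> Twl l (\<lambda>_. False) = \<one>"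
  by (induction l) auto

lemma alpha_Awl:
  assumes "i \<in> set l" "distinct l" "set l \<subseteq> {1..r}"
  shows "alpha i \<otimes> Awl l k = Awl l (k(i := k i + 1))"
  using assms
proof (induction l)
  case Nil then show ?case by simp
next
  case (Cons j l)
  show ?case
  proof (cases "j = i")
    case True
    then have "i \<notin> set l" using Cons by auto
    then have e: "Awl l (k(i := k i + 1)) = Awl l k" by (intro Awl_cong) auto
    have i: "i \<in> {1..r}" using Cons True by auto
    have l: "set l \<subseteq> {1..r}" using Cons by auto
    have p: "alpha i [^] (k i + 1) = alpha i \<otimes> alpha i [^] k i"
      using i by (simp add: int_pow_mult add.commute[of "k i" 1])
    have "alpha i \<otimes> Awl (j # l) k = alpha i \<otimes> (alpha i [^] k i \<otimes> Awl l k)"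
      using True by simp
    also have "\<dots> = alpha i [^] (k i + 1) \<otimes> Awl l k"
      using l i by (simp add: m_assoc p)
    also have "\<dots> = Awl (j # l) (k(i := k i + 1))"
      using True e by (simp only: Awl_Cons fun_upd_same)
    finally show ?thesis .
  next
    case False
    have i: "i \<in> {1..r}" "j \<in> {1..r}" "i \<in> set l" "set l \<subseteq> {1..r}" "distinct l"
      using Cons False by auto
    have c: "alpha i \<otimes> alpha j [^] k j = alpha j [^] k j \<otimes> alpha i"
      using i by (intro commute_int_pow alpha_comm) auto
    have "alpha i \<otimes> (alpha j [^] k j \<otimes> Awl l k) = alpha j [^] k j \<otimes> (alpha i \<otimes> Awl l k)"
      using i by (simp add: m_assoc[symmetric] c)
    then show ?thesis using Cons.IH i False by simp
  qed
qed

lemma tau_Awl: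
  assumes "i \<in> {1..r}" "set l \<subseteq> {1..r}"
  shows "tau i \<otimes> Awl l k = Awl l (\<lambda>j. if j = i then - k j else k j) \<otimes> tau i"
  using assms
proof (induction l)
  case Nil then show ?case by simp
next
  case (Cons j l)
  have j: "j \<in> {1..r}" "set l \<subseteq> {1..r}" using Cons by auto
  have c: "tau i \<otimes> alpha j [^] k j = alpha j [^] (if j = i then - k j else k j) \<otimes> tau i"
  proof (cases "j = i")
    case True
    have "tau i \<otimes> alpha j [^] k j = inv (alpha i) [^] k j \<otimes> tau i"
      using True j assms by (intro commute_int_pow) (auto simp: tau_alpha)
    then show ?thesis using True j by (simp add: int_pow_inv int_pow_neg)
  next
    case False
    have "tau i \<otimes> alpha j [^] k j = alpha j [^] k j \<otimes> tau i"
      using False j assms by (intro commute_int_pow) (auto simp: tau_alpha)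
    then show ?thesis using False by simp
  qed
  have "tau i \<otimes> (alpha j [^] k j \<otimes> Awl l k) = (tau i \<otimes> alpha j [^] k j) \<otimes> Awl l k"
    using j assms by (simp add: m_assoc)
  also have "\<dots> = alpha j [^] (if j = i then - k j else k j) \<otimes> (tau i \<otimes> Awl l k)"
    using j assms by (simp add: c m_assoc)
  also have "\<dots> = alpha j [^] (if j = i then - k j else k j) \<otimes> (Awl l (\<lambda>j. if j = i then - k j else k j) \<otimes> tau i)"
    using Cons.IH j assms by simp
  finally show ?case using j assms by (simp add: m_assoc)
qed

lemma tau_Twl:
  assumes "i \<in> set l" "distinct l" "set l \<subseteq> {1..r}"
  shows "tau i \<otimes> Twl l e = Twl l (e(i := \<not> e i))"
  using assms
proof (induction l)
  case Nil then show ?case by simp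
next
  case (Cons j l)
  show ?case
  proof (cases "j = i")
    case True
    then have "i \<notin> set l" using Cons by auto
    then have e: "Twl l (e(i := \<not> e i)) = Twl l e" by (intro Twl_cong) auto
    have i: "i \<in> {1..r}" using Cons True by auto
    have l: "set l \<subseteq> {1..r}" using Cons by auto
    have "tau i \<otimes> Twl (j # l) e = tau i \<otimes> ((if e i then tau i else \<one>) \<otimes> Twl l e)"
      using True by simp
    also have "\<dots> = (tau i \<otimes> (if e i then tau i else \<one>)) \<otimes> Twl l e"
      using l i by (simp add: m_assoc)
    also have "\<dots> = (if \<not> e i then tau i else \<one>) \<otimes> Twl l e"
      using i l by (simp add: tau_sq)
    also have "\<dots> = Twl (j # l) (e(i := \<not> e i))"
      using True e by (simp only: Twl_Cons fun_upd_same)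
    finally show ?thesis .
  next
    case False
    have i: "i \<in> {1..r}" "j \<in> {1..r}" "i \<in> set l" "set l \<subseteq> {1..r}" "distinct l"
      using Cons False by auto
    have c: "tau i \<otimes> (if e j then tau j else \<one>) = (if e j then tau j else \<one>) \<otimes> tau i"
      using i by (simp add: tau_comm)
    have "tau i \<otimes> ((if e j then tau j else \<one>) \<otimes> Twl l e) = (if e j then tau j else \<one>) \<otimes> (tau i \<otimes> Twl l e)"
      using i by (simp add: m_assoc[symmetric] c)
    then show ?thesis using Cons.IH i False by simp
  qed
qed

lemma Psi_alpha: "i \<in> {1..r} \<Longrightarrow> alpha i \<otimes> Psi p = Psi (\<lambda>j. (if j = i then 1 else 0) + fst p j, snd p)"
proof -
  assume i: "i \<in> {1..r}"
  have "alpha i \<otimes> Psi p = (alpha i \<otimes> Awl ixs (fst p)) \<otimes> Twl ixs (snd p)"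
    using i by (simp add: Psi_def m_assoc)
  also have "\<dots> = Awl ixs ((fst p)(i := fst p i + 1)) \<otimes> Twl ixs (snd p)"
    using i by (simp add: alpha_Awl)
  also have "(fst p)(i := fst p i + 1) = (\<lambda>j. (if j = i then 1 else 0) + fst p j)"
    by (auto simp: fun_eq_iff)
  finally show ?thesis by (simp add: Psi_def)
qed

lemma Psi_alpha_inv: "i \<in> {1..r} \<Longrightarrow> inv (alpha i) \<otimes> Psi p = Psi (\<lambda>j. (if j = i then -1 else 0) + fst p j, snd p)"
proof -
  assume i: "i \<in> {1..r}"
  let ?q = "(\<lambda>j. (if j = i then -1 else 0) + fst p j, snd p)"
  have "alpha i \<otimes> Psi ?q = Psi (\<lambda>j. (if j = i then 1 else 0) + fst ?q j, snd ?q)"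
    using i by (rule Psi_alpha)
  also have "(\<lambda>j. (if j = i then 1 else 0) + fst ?q j, snd ?q) = p"
    by (auto simp: fun_eq_iff prod_eq_iff)
  finally have "alpha i \<otimes> Psi ?q = Psi p" .
  then have "inv (alpha i) \<otimes> Psi p = inv (alpha i) \<otimes> (alpha i \<otimes> Psi ?q)" by simp
  also have "\<dots> = Psi ?q" using i by (simp add: m_assoc[symmetric])
  finally show ?thesis .
qed

lemma Psi_tau: "i \<in> {1..r} \<Longrightarrow>
   tau i \<otimes> Psi p = Psi (\<lambda>j. if j = i then - fst p j else fst p j, \<lambda>j. (j = i) \<noteq> snd p j)"
proof -
  assume i: "i \<in> {1..r}"
  have "tau i \<otimes> Psi p = (tau i \<otimes> Awl ixs (fst p)) \<otimes> Twl ixs (snd p)"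
    using i by (simp add: Psi_def m_assoc)
  also have "\<dots> = Awl ixs (\<lambda>j. if j = i then - fst p j else fst p j) \<otimes> (tau i \<otimes> Twl ixs (snd p))"
    using i by (simp add: tau_Awl m_assoc)
  also have "\<dots> = Awl ixs (\<lambda>j. if j = i then - fst p j else fst p j) \<otimes> Twl ixs ((snd p)(i := \<not> snd p i))"
    using i by (simp add: tau_Twl)
  also have "(snd p)(i := \<not> snd p i) = (\<lambda>j. (j = i) \<noteq> snd p j)"
    by (auto simp: fun_eq_iff)
  finally show ?thesis by (simp add: Psi_def)
qed

lemma Psi_letter:
  assumes "fst x \<in> gens r"
  shows "cl r [x] \<otimes> Psi p = Psi (mulM (evl x) p)"
proof -
  obtain b i f where x: "x = ((b, i), f)" by (metis prod.collapse)
  have i: "i \<in> {1..r}" using assms x by (auto simp: gens_def)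
  show ?thesis
  proof (cases b)
    case True
    have c: "cl r [x] = tau i"
    proof (cases f)
      case f: True
      have "x = lt_inv i" using True f x by (simp add: lt_inv_def)
      then show ?thesis using i by (simp only: cl_lt_inv)
    next
      case f: False
      have "x = lt i" using True f x by (simp add: lt_def)
      then show ?thesis by (simp only: tau_def)
    qed
    have "mulM (evl x) p = (\<lambda>j. if j = i then - fst p j else fst p j, \<lambda>j. (j = i) \<noteq> snd p j)"
      using True x by (auto simp: mulM_def evl_def fun_eq_iff)
    then show ?thesis using c i by (simp add: Psi_tau)
  next
    case False
    show ?thesis
    proof (cases f)
      case True
      have c: "cl r [x] = inv (alpha i)"
        using True False x i by (auto simp: cl_la_inv[symmetric] la_inv_def)
      have "mulM (evl x) p = (\<lambda>j. (if j = i then -1 else 0) + fst p j, snd p)"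
        using True False x by (auto simp: mulM_def evl_def fun_eq_iff)
      then show ?thesis using c i by (simp add: Psi_alpha_inv)
    next
      case f: False
      have c: "cl r [x] = alpha i"
        using f False x i by (auto simp: alpha_def la_def)
      have "mulM (evl x) p = (\<lambda>j. (if j = i then 1 else 0) + fst p j, snd p)"
        using f False x by (auto simp: mulM_def evl_def fun_eq_iff)
      then show ?thesis using c i by (simp add: Psi_alpha)
    qed
  qed
qed

lemma Psi_evw: "w \<in> words_on (gens r) \<Longrightarrow> Psi (evw w) = cl r w"
proof (induction w)
  case Nil
  then show ?case by (simp add: oneM_def Psi_def Awl_zero Twl_False one_cl[symmetric])
next
  case (Cons x w)
  have "Psi (evw (x # w)) = cl r [x] \<otimes> Psi (evw w)"
    using Cons.prems by (simp add: Psi_letter)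
  also have "\<dots> = cl r [x] \<otimes> cl r w" using Cons by simp
  also have "\<dots> = cl r (x # w)" using Cons.prems by (simp add: mult_cl)
  finally show ?case .
qed

lemma Psi_Phi: "x \<in> carrier G \<Longrightarrow> Psi (Phi x) = x"
  by (auto simp: carrier_G Phi_cl Psi_evw)

lemma PhiG_mult: "x \<in> carrier G \<Longrightarrow> y \<in> carrier G \<Longrightarrow> Phi (x \<otimes> y) = mulM (Phi x) (Phi y)"
  using Phi_mult[of x r y] by (simp add: G_def)

lemma PhiG_one: "Phi \<one> = oneM"
  using Phi_one[of r] by (simp add: G_def)

lemma PhiG_inv: "x \<in> carrier G \<Longrightarrow> Phi (inv x) = invM (Phi x)"
  using Phi_inv[of x r] by (simp add: G_def)

lemma PhiG_carM: "x \<in> carrier G \<Longrightarrow> Phi x \<in> carM r"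
  using Phi_carM[of x r] by (simp add: G_def)

lemma Phi_alpha: "i \<in> {1..r} \<Longrightarrow> Phi (alpha i) = (\<lambda>j. if j = i then 1 else 0, \<lambda>_. False)"
  by (simp add: alpha_def Phi_cl la_def evl_def)

lemma Phi_tau: "i \<in> {1..r} \<Longrightarrow> Phi (tau i) = (\<lambda>_. 0, \<lambda>j. j = i)"
  by (simp add: tau_def Phi_cl lt_def evl_def mulM_def oneM_def fun_eq_iff)

lemma Phi_alpha_nat_pow: "i \<in> {1..r} \<Longrightarrow> Phi (alpha i [^] (n::nat)) = (\<lambda>j. if j = i then int n else 0, \<lambda>_. False)"
proof (induction n)
  case 0 then show ?case by (simp add: PhiG_one oneM_def fun_eq_iff)
next
  case (Suc n)
  then show ?case by (simp add: PhiG_mult Phi_alpha mulM_def fun_eq_iff)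
qed

lemma Phi_alpha_int_pow: "i \<in> {1..r} \<Longrightarrow> Phi (alpha i [^] (z::int)) = (\<lambda>j. if j = i then z else 0, \<lambda>_. False)"
proof (cases "z \<ge> 0")
  case True
  assume i: "i \<in> {1..r}"
  have "alpha i [^] z = alpha i [^] (nat z)" using True by (metis int_pow_int nat_0_le)
  then have "Phi (alpha i [^] z) = (\<lambda>j. if j = i then int (nat z) else 0, \<lambda>_. False)"
    using i by (simp add: Phi_alpha_nat_pow)
  moreover have "int (nat z) = z" using True by simp
  ultimately show ?thesis by metis
next
  case False
  assume i: "i \<in> {1..r}"
  define n where "n = nat (-z)"
  have z: "z = - int n" using False by (simp add: n_def)
  have "alpha i [^] z = inv (alpha i [^] n)" using z int_pow_neg_int i by (metis alpha_carrier)
  then have "Phi (alpha i [^] z) = invM (Phi (alpha i [^] n))" using i by (simp add: PhiG_inv)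
  also have "\<dots> = (\<lambda>j. if j = i then - int n else 0, \<lambda>_. False)"
    using i by (simp add: Phi_alpha_nat_pow invM_def fun_eq_iff)
  also have "\<dots> = (\<lambda>j. if j = i then z else 0, \<lambda>_. False)"
    by (simp add: z fun_eq_iff)
  finally show ?thesis .
qed

lemma Phi_Awl: "distinct l \<Longrightarrow> set l \<subseteq> {1..r} \<Longrightarrow>
   Phi (Awl l k) = (\<lambda>j. if j \<in> set l then k j else 0, \<lambda>_. False)"
proof (induction l)
  case Nil then show ?case by (simp add: PhiG_one oneM_def)
next
  case (Cons j l)
  then show ?case by (auto simp: PhiG_mult Phi_alpha_int_pow mulM_def fun_eq_iff)
qed

lemma Phi_Twl: "distinct l \<Longrightarrow> set l \<subseteq> {1..r} \<Longrightarrow>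
   Phi (Twl l e) = (\<lambda>_. 0, \<lambda>j. j \<in> set l \<and> e j)"
proof (induction l)
  case Nil then show ?case by (simp add: PhiG_one oneM_def)
next
  case (Cons j l)
  have "Phi (if e j then tau j else \<one>) = (\<lambda>_. 0, \<lambda>m. m = j \<and> e j)"
    using Cons.prems by (auto simp: Phi_tau PhiG_one oneM_def)
  then show ?case using Cons by (auto simp: PhiG_mult mulM_def fun_eq_iff)
qed

lemma Phi_Psi: "p \<in> carM r \<Longrightarrow> Phi (Psi p) = p"
  by (auto simp: Psi_def PhiG_mult Phi_Awl Phi_Twl mulM_def fun_eq_iff prod_eq_iff carM_def)

lemma Psi_mulM: "p \<in> carM r \<Longrightarrow> q \<in> carM r \<Longrightarrow> Psi (mulM p q) = Psi p \<otimes> Psi q"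
proof -
  assume pq: "p \<in> carM r" "q \<in> carM r"
  have "mulM p q = Phi (Psi p \<otimes> Psi q)" using pq by (simp add: PhiG_mult Phi_Psi)
  then show ?thesis by (simp add: Psi_Phi)
qed

lemma Psi_inj: "p \<in> carM r \<Longrightarrow> q \<in> carM r \<Longrightarrow> Psi p = Psi q \<Longrightarrow> p = q"
  by (metis Phi_Psi)

lemma Phi_inj: "x \<in> carrier G \<Longrightarrow> y \<in> carrier G \<Longrightarrow> Phi x = Phi y \<Longrightarrow> x = y"
  by (metis Psi_Phi)

lemma Psi_invM: "p \<in> carM r \<Longrightarrow> Psi (invM p) = inv (Psi p)"
proof -
  assume p: "p \<in> carM r"
  have "Phi (inv (Psi p)) = invM p" using p by (simp add: PhiG_inv Phi_Psi)
  then show ?thesis by (metis Psi_Phi inv_closed Psi_carrier)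
qed

lemma Psi_oneM: "Psi oneM = \<one>"
  by (metis Psi_Phi PhiG_one one_closed)

end


context Dr
begin

definition Hsub :: "(bool \<times> nat) word set set" where
  "Hsub = {x \<in> carrier G. snd (Phi x) = (\<lambda>_. False)}"

lemma subgroup_Hsub: "subgroup Hsub G"
proof (rule subgroup.intro)
  show "Hsub \<subseteq> carrier G" by (auto simp: Hsub_def)
  show "\<And>x y. x \<in> Hsub \<Longrightarrow> y \<in> Hsub \<Longrightarrow> x \<otimes> y \<in> Hsub"
    by (auto simp: Hsub_def PhiG_mult mulM_def fun_eq_iff)
  show "\<one> \<in> Hsub" by (auto simp: Hsub_def PhiG_one oneM_def)
  show "\<And>x. x \<in> Hsub \<Longrightarrow> inv x \<in> Hsub"
    by (auto simp: Hsub_def PhiG_inv invM_def)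
qed

lemma finite_bool_funs: "finite {e :: nat \<Rightarrow> bool. \<forall>i. i \<notin> {1..r} \<longrightarrow> \<not> e i}"
proof -
  have "{e :: nat \<Rightarrow> bool. \<forall>i. i \<notin> {1..r} \<longrightarrow> \<not> e i} \<subseteq> (\<lambda>S i. i \<in> S) ` Pow {1..r}"
  proof
    fix e :: "nat \<Rightarrow> bool" assume "e \<in> {e. \<forall>i. i \<notin> {1..r} \<longrightarrow> \<not> e i}"
    then have "{i. e i} \<in> Pow {1..r}" "e = (\<lambda>i. i \<in> {i. e i})" by auto
    then show "e \<in> (\<lambda>S i. i \<in> S) ` Pow {1..r}" by blast
  qed
  then show ?thesis by (rule finite_subset) auto
qed

lemma finite_rcosets_Hsub: "finite (rcosets Hsub)"
proof -
  have "rcosets Hsub \<subseteq> (\<lambda>e. Hsub #> Psi (\<lambda>_. 0, e)) ` {e. \<forall>i. i \<notin> {1..r} \<longrightarrow> \<not> e i}"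
  proof
    fix C assume "C \<in> rcosets Hsub"
    then obtain x where x: "x \<in> carrier G" "C = Hsub #> x" by (auto simp: RCOSETS_def)
    define k where "k = fst (Phi x)"
    define e where "e = snd (Phi x)"
    have p: "Phi x \<in> carM r" using x by (simp add: PhiG_carM)
    have kc: "(k, \<lambda>_. False) \<in> carM r" and ec: "(\<lambda>_. 0, e) \<in> carM r"
      using p by (auto simp: carM_def k_def e_def)
    have "mulM (k, \<lambda>_. False) (\<lambda>_. 0, e) = Phi x"
      by (simp add: mulM_def k_def e_def)
    then have "x = Psi (k, \<lambda>_. False) \<otimes> Psi (\<lambda>_. 0, e)"
      using kc ec x by (metis Psi_Phi Psi_mulM)
    moreover have "Psi (k, \<lambda>_. False) \<in> Hsub"
      using kc by (simp add: Hsub_def Phi_Psi)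
    ultimately have "Hsub #> x = Hsub #> Psi (\<lambda>_. 0, e)"
      using subgroup_Hsub
      by (metis coset_join2 coset_mult_assoc Psi_carrier subgroup.subset)
    moreover have "e \<in> {e. \<forall>i. i \<notin> {1..r} \<longrightarrow> \<not> e i}" using p by (auto simp: carM_def e_def)
    ultimately show "C \<in> (\<lambda>e. Hsub #> Psi (\<lambda>_. 0, e)) ` {e. \<forall>i. i \<notin> {1..r} \<longrightarrow> \<not> e i}"
      using x by blast
  qed
  then show ?thesis using finite_bool_funs by (meson finite_imageI finite_subset)
qed

definition fH :: "(bool \<times> nat) word set \<Rightarrow> nat \<Rightarrow>\<^sub>0 int" where
  "fH x = Abs_poly_mapping (\<lambda>j. if j < r then fst (Phi x) (Suc j) else 0)"

lemma finite_lt_r: "finite {j. (if j < r then f j else (0::int)) \<noteq> 0}"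
  by (rule finite_subset[of _ "{..<r}"]) auto

lemma lookup_fH: "Poly_Mapping.lookup (fH x) = (\<lambda>j. if j < r then fst (Phi x) (Suc j) else 0)"
proof -
  have "finite {j. (if j < r then fst (Phi x) (Suc j) else 0) \<noteq> 0}"
    by (rule finite_subset[of _ "{..<r}"]) auto
  then show ?thesis unfolding fH_def by simp
qed

lemma iso_Hsub: "G\<lparr>carrier := Hsub\<rparr> \<cong> free_Abelian_group {..<r}"
proof (rule is_isoI, rule isoI)
  show "fH \<in> hom (G\<lparr>carrier := Hsub\<rparr>) (free_Abelian_group {..<r})"
  proof (rule homI)
    fix x assume "x \<in> carrier (G\<lparr>carrier := Hsub\<rparr>)"
    show "fH x \<in> carrier (free_Abelian_group {..<r})"
      by (auto simp: free_Abelian_group_def in_keys_iff lookup_fH split: if_splits)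
  next
    fix x y assume xy: "x \<in> carrier (G\<lparr>carrier := Hsub\<rparr>)" "y \<in> carrier (G\<lparr>carrier := Hsub\<rparr>)"
    then have "x \<in> carrier G" "y \<in> carrier G" "snd (Phi x) = (\<lambda>_. False)"
      by (auto simp: Hsub_def)
    then show "fH (x \<otimes>\<^bsub>G\<lparr>carrier := Hsub\<rparr>\<^esub> y) = fH x \<otimes>\<^bsub>free_Abelian_group {..<r}\<^esub> fH y"
      by (auto simp: free_Abelian_group_def PhiG_mult mulM_def intro!: poly_mapping_eqI
          simp: lookup_add lookup_fH)
  qed
  show "bij_betw fH (carrier (G\<lparr>carrier := Hsub\<rparr>)) (carrier (free_Abelian_group {..<r}))"
    unfolding bij_betw_def
  proof
    show "inj_on fH (carrier (G\<lparr>carrier := Hsub\<rparr>))"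
    proof (rule inj_onI)
      fix x y assume xy: "x \<in> carrier (G\<lparr>carrier := Hsub\<rparr>)" "y \<in> carrier (G\<lparr>carrier := Hsub\<rparr>)"
        "fH x = fH y"
      then have c: "x \<in> carrier G" "y \<in> carrier G" "snd (Phi x) = (\<lambda>_. False)" "snd (Phi y) = (\<lambda>_. False)"
        by (auto simp: Hsub_def)
      have cm: "Phi x \<in> carM r" "Phi y \<in> carM r" using c by (auto simp: PhiG_carM)
      have "Poly_Mapping.lookup (fH x) = Poly_Mapping.lookup (fH y)" using xy(3) by simp
      then have "\<And>j. j < r \<Longrightarrow> fst (Phi x) (Suc j) = fst (Phi y) (Suc j)"
        unfolding lookup_fH fun_eq_iff by metis
      then have "fst (Phi x) = fst (Phi y)"
      proof -
        assume h: "\<And>j. j < r \<Longrightarrow> fst (Phi x) (Suc j) = fst (Phi y) (Suc j)"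
        show ?thesis
        proof
          fix i
          show "fst (Phi x) i = fst (Phi y) i"
          proof (cases "i \<in> {1..r}")
            case True
            then obtain j where "i = Suc j" "j < r" by (cases i) auto
            then show ?thesis using h by simp
          next
            case False
            then show ?thesis using cm by (simp add: carM_def)
          qed
        qed
      qed
      then have "Phi x = Phi y" using c by (simp add: prod_eq_iff)
      then show "x = y" using c Phi_inj by blast
    qed
  next
    show "fH ` carrier (G\<lparr>carrier := Hsub\<rparr>) = carrier (free_Abelian_group {..<r})"
    proof
      show "fH ` carrier (G\<lparr>carrier := Hsub\<rparr>) \<subseteq> carrier (free_Abelian_group {..<r})"
        by (auto simp: free_Abelian_group_def in_keys_iff lookup_fH split: if_splits)
    next
      show "carrier (free_Abelian_group {..<r}) \<subseteq> fH ` carrier (G\<lparr>carrier := Hsub\<rparr>)"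
      proof
        fix c assume "c \<in> carrier (free_Abelian_group {..<r})"
        then have c: "\<And>j. j \<ge> r \<Longrightarrow> Poly_Mapping.lookup c j = 0"
          by (auto simp: free_Abelian_group_def in_keys_iff)
        define q where "q = ((\<lambda>i. if i \<in> {1..r} then Poly_Mapping.lookup c (i - 1) else 0), (\<lambda>_::nat. False))"
        have q: "q \<in> carM r" by (auto simp: carM_def q_def)
        have "Psi q \<in> Hsub" using q by (simp add: Hsub_def Phi_Psi q_def)
        moreover have "fH (Psi q) = c"
          using q c by (intro poly_mapping_eqI) (auto simp: lookup_fH Phi_Psi q_def)
        ultimately show "c \<in> fH ` carrier (G\<lparr>carrier := Hsub\<rparr>)" by force
      qed
    qed
  qed
qed

lemma virt_ab: "virtually_abelian_rank G r"
  unfolding virtually_abelian_rank_def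
  using subgroup_Hsub finite_rcosets_Hsub iso_Hsub by blast

end


lemma comm_M: "mulM (mulM (mulM p q) (invM p)) (invM q) =
  (\<lambda>i. 2 * ((if snd q i then fst p i else 0) - (if snd p i then fst q i else 0)), \<lambda>_. False)"
  by (auto simp: mulM_def invM_def fun_eq_iff)

context Dr
begin

lemma gen_a_alpha: "gen_a r i = alpha i"
  by (simp add: gen_a_def pres_gen_def alpha_def cls_def la_def)

definition Ysq :: "(bool \<times> nat) word set set" where
  "Ysq = {alpha i \<otimes> alpha i | i. i \<in> {1..r}}"

lemma Ysq_carrier: "Ysq \<subseteq> carrier G"
  by (auto simp: Ysq_def)

lemma alpha_pow_gen: "i \<in> {1..r} \<Longrightarrow> alpha i [^] (2 * (z::int)) \<in> generate G Ysq"
proof -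
  assume i: "i \<in> {1..r}"
  have aa: "alpha i \<otimes> alpha i = alpha i [^] (2::int)"
    using i int_pow_mult[of "alpha i" 1 1] by simp
  have "alpha i [^] (2 * z) = (alpha i [^] (2::int)) [^] z"
    using i by (simp add: int_pow_pow)
  also have "\<dots> = (alpha i \<otimes> alpha i) [^] z" by (simp add: aa)
  also have "\<dots> \<in> generate G {alpha i \<otimes> alpha i}"
    using i by (subst generate_pow) auto
  also have "\<dots> \<subseteq> generate G Ysq"
    using i by (intro mono_generate) (auto simp: Ysq_def)
  finally show ?thesis .
qed

lemma Awl_gen: "set l \<subseteq> {1..r} \<Longrightarrow> Awl l (\<lambda>i. 2 * j i) \<in> generate G Ysq"
proof (induction l)
  case Nil then show ?case by (simp add: generate.one)
next
  case (Cons a l)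
  then show ?case by (auto intro!: generate.eng alpha_pow_gen)
qed

lemma derived_eq: "derived G (carrier G) = generate G Ysq"
proof
  show "derived G (carrier G) \<subseteq> generate G Ysq"
    unfolding derived_def
  proof (rule generate_subgroup_incl)
    show "subgroup (generate G Ysq) G" using Ysq_carrier by (rule generate_is_subgroup)
    show "derived_set G (carrier G) \<subseteq> generate G Ysq"
    proof
      fix c assume "c \<in> derived_set G (carrier G)"
      then obtain h1 h2 where h: "h1 \<in> carrier G" "h2 \<in> carrier G"
        "c = h1 \<otimes> h2 \<otimes> inv h1 \<otimes> inv h2" by blast
      define j where "j = (\<lambda>i. (if snd (Phi h2) i then fst (Phi h1) i else 0) - (if snd (Phi h1) i then fst (Phi h2) i else 0))"
      have c: "c \<in> carrier G" using h by simp
      have pc: "Phi c = (\<lambda>i. 2 * j i, \<lambda>_. False)"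
        using h by (simp add: PhiG_mult PhiG_inv comm_M j_def)
      have "c = Psi (Phi c)" using c by (simp add: Psi_Phi)
      also have "\<dots> = Psi (\<lambda>i. 2 * j i, \<lambda>_. False)" by (simp only: pc)
      also have "\<dots> = Awl ixs (\<lambda>i. 2 * j i)" by (simp add: Psi_def Twl_False)
      also have "\<dots> \<in> generate G Ysq" by (rule Awl_gen) simp
      finally show "c \<in> generate G Ysq" .
    qed
  qed
next
  have sub: "subgroup (derived G (carrier G)) G"
    unfolding derived_def by (intro generate_is_subgroup derived_set_in_carrier) simp
  show "generate G Ysq \<subseteq> derived G (carrier G)"
  proof (rule generate_subgroup_incl[OF _ sub])
    show "Ysq \<subseteq> derived G (carrier G)"
    proof
      fix y assume "y \<in> Ysq"
      then obtain i where i: "i \<in> {1..r}" "y = alpha i \<otimes> alpha i" by (auto simp: Ysq_def)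
      have "Phi (alpha i \<otimes> alpha i) = Phi (alpha i \<otimes> tau i \<otimes> inv (alpha i) \<otimes> inv (tau i))"
        using i by (simp add: PhiG_mult PhiG_inv comm_M Phi_alpha Phi_tau, simp add: mulM_def fun_eq_iff)
      then have "y = alpha i \<otimes> tau i \<otimes> inv (alpha i) \<otimes> inv (tau i)"
        using i by (intro Phi_inj) auto
      moreover have "alpha i \<otimes> tau i \<otimes> inv (alpha i) \<otimes> inv (tau i) \<in> derived_set G (carrier G)"
        using i by (intro UN_I[of "alpha i"] UN_I[of "tau i"]) auto
      ultimately have "y \<in> derived_set G (carrier G)" by simp
      then show "y \<in> derived G (carrier G)" unfolding derived_def by (rule generate.incl)
    qed
  qed
qed

end


context Dr
begin

definition vE :: "(nat \<Rightarrow> int) \<Rightarrow> elt" where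
  "vE v = (\<lambda>j. if j \<in> {1..r} then 2 * v j else 0, \<lambda>_. False)"

definition E :: "(nat \<Rightarrow> int) \<Rightarrow> (bool \<times> nat) word set" where
  "E v = Psi (vE v)"

lemma vE_carM [simp]: "vE v \<in> carM r"
  by (auto simp: carM_def vE_def)

lemma E_carrier [simp]: "E v \<in> carrier G"
  by (simp add: E_def)

lemma Phi_E: "Phi (E v) = vE v"
  by (simp add: E_def Phi_Psi)

lemma snd_vE [simp]: "snd (vE v) = (\<lambda>_. False)"
  by (simp add: vE_def)

lemma fst_vE: "fst (vE v) j = (if j \<in> {1..r} then 2 * v j else 0)"
  by (simp add: vE_def)

lemma mulM_vE: "mulM (vE v) (vE w) = vE (\<lambda>j. v j + w j)"
  by (auto simp: mulM_def vE_def fun_eq_iff)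

lemma E_mult: "E v \<otimes> E w = E (\<lambda>j. v j + w j)"
  unfolding E_def by (simp add: Psi_mulM[symmetric] mulM_vE)

lemma E_zero: "E (\<lambda>_. 0) = \<one>"
proof -
  have "vE (\<lambda>_. 0) = oneM"
    by (auto simp: oneM_def vE_def fun_eq_iff)
  then show ?thesis by (simp add: E_def Psi_oneM)
qed

lemma E_eq: "E v = E w \<Longrightarrow> j \<in> {1..r} \<Longrightarrow> v j = w j"
proof -
  assume "E v = E w" "j \<in> {1..r}"
  then have "fst (Phi (E v)) j = fst (Phi (E w)) j" by simp
  then show "v j = w j" using \<open>j \<in> {1..r}\<close> by (simp add: Phi_E fst_vE)
qed

lemma E_cong: "(\<And>j. j \<in> {1..r} \<Longrightarrow> v j = w j) \<Longrightarrow> E v = E w"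
  unfolding E_def vE_def by (rule arg_cong[of _ _ Psi]) (auto simp: fun_eq_iff)

lemma E_inv: "inv (E v) = E (\<lambda>j. - v j)"
proof -
  have "E v \<otimes> E (\<lambda>j. - v j) = \<one>" by (simp add: E_mult E_zero)
  then show ?thesis by (metis E_carrier inv_equality inv_comm)
qed

lemma E_nat_pow: "E v [^] (n::nat) = E (\<lambda>j. int n * v j)"
proof (induction n)
  case 0 then show ?case by (simp add: E_zero)
next
  case (Suc n)
  then show ?case by (simp add: E_mult algebra_simps)
qed

lemma E_int_pow: "E v [^] (z::int) = E (\<lambda>j. z * v j)"
proof (cases "z \<ge> 0")
  case True
  define n where "n = nat z"
  have z: "z = int n" using True by (simp add: n_def)
  have "E v [^] z = E v [^] n" by (simp add: z int_pow_int)
  then show ?thesis by (simp add: E_nat_pow z)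
next
  case False
  define n where "n = nat (-z)"
  have z: "z = - int n" using False by (simp add: n_def)
  have "E v [^] z = inv (E v [^] n)" by (simp add: z int_pow_neg_int)
  also have "\<dots> = E (\<lambda>j. z * v j)" by (simp add: E_nat_pow E_inv z)
  finally show ?thesis .
qed

lemma E_foldr: "distinct l \<Longrightarrow> set l \<subseteq> {1..r} \<Longrightarrow>
  foldr (\<lambda>i acc. E (V i) \<otimes> acc) l \<one> = E (\<lambda>j. \<Sum>i\<in>set l. V i j)"
proof (induction l)
  case Nil then show ?case by (simp add: E_zero)
next
  case (Cons a l)
  then show ?case by (simp add: E_mult)
qed

definition beta :: "nat \<Rightarrow> (bool \<times> nat) word set" where
  "beta i = E (\<lambda>l. if l = i then 1 else 0)"

definition Pp :: "(bool \<times> nat) word set \<Rightarrow> bool" where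
  "Pp x \<longleftrightarrow> x \<in> carrier G \<and> (\<exists>h\<in>carrier G. x = h \<otimes> h) \<and> x \<noteq> \<one> \<and>
     (\<forall>h1\<in>carrier G. \<forall>h2\<in>carrier G. h1 \<otimes> x \<otimes> inv h1 = x \<or> h2 \<otimes> x \<otimes> inv h2 = x \<or>
        h1 \<otimes> x \<otimes> inv h1 = h2 \<otimes> x \<otimes> inv h2)"

lemma conj_M: "snd q = (\<lambda>_. False) \<Longrightarrow>
  mulM (mulM p q) (invM p) = (\<lambda>j. if snd p j then - fst q j else fst q j, \<lambda>_. False)"
  by (auto simp: mulM_def invM_def fun_eq_iff)

lemma sq_M: "mulM p p = (\<lambda>j. if snd p j then 0 else 2 * fst p j, \<lambda>_. False)"
  by (auto simp: mulM_def fun_eq_iff)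

lemma Pp_iso:
  assumes phi: "\<phi> \<in> iso G G" and P: "Pp x"
  shows "Pp (\<phi> x)"
proof -
  interpret gh: group_hom G G \<phi>
    using phi by (intro group_hom.intro group_hom_axioms.intro is_group) (simp add: iso_iff)
  have surj: "\<phi> ` carrier G = carrier G" and inj: "inj_on \<phi> (carrier G)"
    using phi by (auto simp: iso_iff)
  have x: "x \<in> carrier G" using P by (simp add: Pp_def)
  have c1: "\<phi> x \<in> carrier G" using x by simp
  obtain h where h: "h \<in> carrier G" "x = h \<otimes> h" using P by (auto simp: Pp_def)
  have c2: "\<exists>h\<in>carrier G. \<phi> x = h \<otimes> h" using h by (intro bexI[of _ "\<phi> h"]) auto
  have c3: "\<phi> x \<noteq> \<one>"
  proof
    assume "\<phi> x = \<one>"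
    then have "\<phi> x = \<phi> \<one>" by simp
    then have "x = \<one>" using inj x by (meson inj_onD one_closed)
    then show False using P by (simp add: Pp_def)
  qed
  have c4: "\<forall>h1\<in>carrier G. \<forall>h2\<in>carrier G. h1 \<otimes> \<phi> x \<otimes> inv h1 = \<phi> x \<or> h2 \<otimes> \<phi> x \<otimes> inv h2 = \<phi> x \<or>
        h1 \<otimes> \<phi> x \<otimes> inv h1 = h2 \<otimes> \<phi> x \<otimes> inv h2"
  proof (intro ballI)
    fix h1 h2 assume hh: "h1 \<in> carrier G" "h2 \<in> carrier G"
    then have "h1 \<in> \<phi> ` carrier G" "h2 \<in> \<phi> ` carrier G" using surj by simp_all
    then obtain g1 g2 where g: "g1 \<in> carrier G" "g2 \<in> carrier G" "h1 = \<phi> g1" "h2 = \<phi> g2"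
      by blast
    have e1: "h1 \<otimes> \<phi> x \<otimes> inv h1 = \<phi> (g1 \<otimes> x \<otimes> inv g1)" using g x by simp
    have e2: "h2 \<otimes> \<phi> x \<otimes> inv h2 = \<phi> (g2 \<otimes> x \<otimes> inv g2)" using g x by simp
    have "\<forall>h1\<in>carrier G. \<forall>h2\<in>carrier G. h1 \<otimes> x \<otimes> inv h1 = x \<or> h2 \<otimes> x \<otimes> inv h2 = x \<or>
        h1 \<otimes> x \<otimes> inv h1 = h2 \<otimes> x \<otimes> inv h2" using P unfolding Pp_def by blast
    then have "g1 \<otimes> x \<otimes> inv g1 = x \<or> g2 \<otimes> x \<otimes> inv g2 = x \<or> g1 \<otimes> x \<otimes> inv g1 = g2 \<otimes> x \<otimes> inv g2"
      using g by blast
    then show "h1 \<otimes> \<phi> x \<otimes> inv h1 = \<phi> x \<or> h2 \<otimes> \<phi> x \<otimes> inv h2 = \<phi> x \<or>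
        h1 \<otimes> \<phi> x \<otimes> inv h1 = h2 \<otimes> \<phi> x \<otimes> inv h2"
      unfolding e1 e2 by auto
  qed
  show ?thesis using c1 c2 c3 c4 by (simp add: Pp_def)
qed

lemma Phi_conj_E: "h \<in> carrier G \<Longrightarrow> Phi (h \<otimes> E v \<otimes> inv h) =
   (\<lambda>j. if snd (Phi h) j then - fst (vE v) j else fst (vE v) j, \<lambda>_. False)"
  by (simp add: PhiG_mult PhiG_inv Phi_E conj_M)

lemma Pp_beta: "i \<in> {1..r} \<Longrightarrow> Pp (beta i)"
proof -
  assume i: "i \<in> {1..r}"
  define v :: "nat \<Rightarrow> int" where "v = (\<lambda>l. if l = i then 1 else 0)"
  have b: "beta i = E v" by (simp add: beta_def v_def)
  have sq: "beta i = alpha i \<otimes> alpha i"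
    using i by (intro Phi_inj) (auto simp: b Phi_E PhiG_mult Phi_alpha mulM_def fun_eq_iff v_def vE_def)
  have ne: "beta i \<noteq> \<one>"
  proof
    assume "beta i = \<one>"
    then have "fst (Phi (beta i)) i = fst (Phi \<one>) i" by simp
    then show False using i by (simp add: b Phi_E PhiG_one oneM_def v_def fst_vE)
  qed
  have cj: "h \<otimes> beta i \<otimes> inv h = beta i \<or> h \<otimes> beta i \<otimes> inv h = E (\<lambda>l. - v l)"
    if h: "h \<in> carrier G" for h
  proof (cases "snd (Phi h) i")
    case True
    have "h \<otimes> beta i \<otimes> inv h = E (\<lambda>l. - v l)"
      using h True by (intro Phi_inj) (auto simp: b Phi_conj_E Phi_E fun_eq_iff v_def vE_def)
    then show ?thesis by simp
  next
    case False
    have "h \<otimes> beta i \<otimes> inv h = beta i"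
      using h False by (intro Phi_inj) (auto simp: b Phi_conj_E Phi_E fun_eq_iff v_def vE_def)
    then show ?thesis by simp
  qed
  show ?thesis unfolding Pp_def
  proof (intro conjI ballI)
    show "beta i \<in> carrier G" by (simp add: b)
    show "\<exists>h\<in>carrier G. beta i = h \<otimes> h" using sq i by (intro bexI[of _ "alpha i"]) auto
    show "beta i \<noteq> \<one>" by (rule ne)
    fix h1 h2 assume "h1 \<in> carrier G" "h2 \<in> carrier G"
    then show "h1 \<otimes> beta i \<otimes> inv h1 = beta i \<or> h2 \<otimes> beta i \<otimes> inv h2 = beta i \<or>
        h1 \<otimes> beta i \<otimes> inv h1 = h2 \<otimes> beta i \<otimes> inv h2"
      using cj by metis
  qed
qed

lemma Pp_form:
  assumes P: "Pp x"
  shows "\<exists>j m. j \<in> {1..r} \<and> m \<noteq> 0 \<and> x = E (\<lambda>l. if l = j then m else 0)"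
proof -
  have x: "x \<in> carrier G" using P by (simp add: Pp_def)
  obtain h where h: "h \<in> carrier G" "x = h \<otimes> h" using P by (auto simp: Pp_def)
  define u where "u = (\<lambda>j. if snd (Phi h) j then 0 else fst (Phi h) j)"
  have hc: "Phi h \<in> carM r" using h by (simp add: PhiG_carM)
  have u0: "\<And>j. j \<notin> {1..r} \<Longrightarrow> u j = 0" using hc by (auto simp: u_def carM_def)
  have Px: "Phi x = (\<lambda>j. 2 * u j, \<lambda>_. False)"
    using h by (auto simp: PhiG_mult sq_M u_def fun_eq_iff)
  have xE: "x = E u"
    using x Px u0 by (intro Phi_inj) (auto simp: Phi_E fun_eq_iff vE_def)
  obtain j0 where j0: "j0 \<in> {1..r}" "u j0 \<noteq> 0"
  proof -
    have "x \<noteq> \<one>" using P by (simp add: Pp_def)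
    then have "Phi x \<noteq> oneM" using x by (metis PhiG_one Phi_inj one_closed)
    then obtain j where "u j \<noteq> 0" using Px by (auto simp: oneM_def fun_eq_iff)
    then show ?thesis using that u0 by blast
  qed
  have only: "u j = 0" if j: "j \<in> {1..r}" "j \<noteq> j0" for j
  proof (rule ccontr)
    assume uj: "u j \<noteq> 0"
    have t0: "Phi (tau j0 \<otimes> x \<otimes> inv (tau j0)) =
        (\<lambda>l. if l = j0 then - fst (vE u) l else fst (vE u) l, \<lambda>_. False)"
      using j0 by (simp add: xE Phi_conj_E Phi_tau)
    have t1: "Phi (tau j \<otimes> x \<otimes> inv (tau j)) =
        (\<lambda>l. if l = j then - fst (vE u) l else fst (vE u) l, \<lambda>_. False)"
      using j by (simp add: xE Phi_conj_E Phi_tau)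
    have PxE: "Phi x = vE u"
      by (simp add: xE Phi_E)
    have d1: "tau j0 \<otimes> x \<otimes> inv (tau j0) \<noteq> x"
    proof
      assume "tau j0 \<otimes> x \<otimes> inv (tau j0) = x"
      then have "fst (Phi (tau j0 \<otimes> x \<otimes> inv (tau j0))) j0 = fst (Phi x) j0" by simp
      then show False using j0 by (simp add: t0 PxE fst_vE)
    qed
    have d2: "tau j \<otimes> x \<otimes> inv (tau j) \<noteq> x"
    proof
      assume "tau j \<otimes> x \<otimes> inv (tau j) = x"
      then have "fst (Phi (tau j \<otimes> x \<otimes> inv (tau j))) j = fst (Phi x) j" by simp
      then show False using j uj by (simp add: t1 PxE fst_vE)
    qed
    have d3: "tau j0 \<otimes> x \<otimes> inv (tau j0) \<noteq> tau j \<otimes> x \<otimes> inv (tau j)"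
    proof
      assume "tau j0 \<otimes> x \<otimes> inv (tau j0) = tau j \<otimes> x \<otimes> inv (tau j)"
      then have "fst (Phi (tau j0 \<otimes> x \<otimes> inv (tau j0))) j0 = fst (Phi (tau j \<otimes> x \<otimes> inv (tau j))) j0" by simp
      then show False using j j0 by (simp add: t0 t1 fst_vE)
    qed
    show False using P d1 d2 d3 j j0 unfolding Pp_def by (meson tau_carrier)
  qed
  have "x = E (\<lambda>l. if l = j0 then u j0 else 0)"
    unfolding xE by (rule E_cong) (use only in auto)
  then show ?thesis using j0 by blast
qed

end


lemma div_block: "a * (n + 1) \<le> (x::nat) \<Longrightarrow> x \<le> a * (n + 1) + n \<Longrightarrow> x div (n + 1) = a"
  by (rule div_nat_eqI) (auto simp: algebra_simps)

context Dr
begin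

lemma beta_carrier [simp]: "beta i \<in> carrier G"
  by (simp add: beta_def)

lemma beta_int_pow: "beta j [^] (z::int) = E (\<lambda>l. if l = j then z else 0)"
  by (simp add: beta_def E_int_pow if_distrib cong: if_cong)

lemma E_delta_pow: "E (\<lambda>l. if l = j then m else 0) [^] (z::int) = E (\<lambda>l. if l = j then z * m else 0)"
  by (simp add: E_int_pow if_distrib cong: if_cong)

lemma aut_beta:
  assumes phi: "\<phi> \<in> iso G G"
  shows "\<exists>\<sigma> m. \<forall>i\<in>{1..r}. \<sigma> i \<in> {1..r} \<and> m i \<noteq> (0::int) \<and> \<phi> (beta i) = E (\<lambda>l. if l = \<sigma> i then m i else 0)"
proof -
  have "\<forall>i\<in>{1..r}. \<exists>p. fst p \<in> {1..r} \<and> snd p \<noteq> (0::int) \<and> \<phi> (beta i) = E (\<lambda>l. if l = fst p then snd p else 0)"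
  proof
    fix i assume i: "i \<in> {1..r}"
    have "Pp (\<phi> (beta i))" by (rule Pp_iso[OF phi Pp_beta[OF i]])
    then obtain j m where "j \<in> {1..r}" "m \<noteq> 0" "\<phi> (beta i) = E (\<lambda>l. if l = j then m else 0)"
      using Pp_form by blast
    then show "\<exists>p. fst p \<in> {1..r} \<and> snd p \<noteq> (0::int) \<and> \<phi> (beta i) = E (\<lambda>l. if l = fst p then snd p else 0)"
      by (intro exI[of _ "(j, m)"]) (simp only: fst_conv snd_conv, blast)
  qed
  from bchoice[OF this] obtain f where "\<forall>i\<in>{1..r}. fst (f i) \<in> {1..r} \<and> snd (f i) \<noteq> (0::int) \<and> \<phi> (beta i) = E (\<lambda>l. if l = fst (f i) then snd (f i) else 0)"
    by blast
  then show ?thesis by (intro exI[of _ "\<lambda>i. fst (f i)"] exI[of _ "\<lambda>i. snd (f i)"]) simp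
qed

lemma aut_struct:
  assumes phi: "\<phi> \<in> iso G G"
  obtains \<sigma> m where "\<And>i. i \<in> {1..r} \<Longrightarrow> \<sigma> i \<in> {1..r} \<and> (m i = 1 \<or> m i = (-1::int)) \<and>
        \<phi> (beta i) = E (\<lambda>l. if l = \<sigma> i then m i else 0)"
    and "inj_on \<sigma> {1..r}"
proof -
  define \<psi> where "\<psi> = inv_into (carrier G) \<phi>"
  have psi: "\<psi> \<in> iso G G" unfolding \<psi>_def using phi by (rule iso_set_sym)
  interpret gh: group_hom G G \<psi>
    using psi by (intro group_hom.intro group_hom_axioms.intro is_group) (simp add: iso_iff)
  have inj: "inj_on \<phi> (carrier G)" using phi by (simp add: iso_iff)
  obtain \<sigma> m where sm: "\<forall>i\<in>{1..r}. \<sigma> i \<in> {1..r} \<and> m i \<noteq> (0::int) \<and> \<phi> (beta i) = E (\<lambda>l. if l = \<sigma> i then m i else 0)"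
    using aut_beta[OF phi] by blast
  obtain \<sigma>' m' where sm': "\<forall>i\<in>{1..r}. \<sigma>' i \<in> {1..r} \<and> m' i \<noteq> (0::int) \<and> \<psi> (beta i) = E (\<lambda>l. if l = \<sigma>' i then m' i else 0)"
    using aut_beta[OF psi] by blast
  have key: "\<sigma>' (\<sigma> i) = i \<and> m i * m' (\<sigma> i) = 1" if i: "i \<in> {1..r}" for i
  proof -
    have "\<psi> (\<phi> (beta i)) = beta i" unfolding \<psi>_def using inj by (simp add: inv_into_f_f)
    moreover have "\<phi> (beta i) = beta (\<sigma> i) [^] m i" using sm i by (simp add: beta_int_pow)
    moreover have "\<psi> (beta (\<sigma> i) [^] m i) = \<psi> (beta (\<sigma> i)) [^] m i" by (simp add: gh.hom_int_pow)
    moreover have "\<psi> (beta (\<sigma> i)) = E (\<lambda>l. if l = \<sigma>' (\<sigma> i) then m' (\<sigma> i) else 0)" using sm sm' i by blast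
    ultimately have "E (\<lambda>l. if l = \<sigma>' (\<sigma> i) then m i * m' (\<sigma> i) else 0) = E (\<lambda>l. if l = i then 1 else 0)"
      by (simp add: E_delta_pow beta_def)
    then have "(if i = \<sigma>' (\<sigma> i) then m i * m' (\<sigma> i) else 0) = (if i = i then 1 else 0)"
      using i by (rule E_eq)
    then show ?thesis by (auto split: if_splits)
  qed
  show ?thesis
  proof (rule that)
    fix i assume i: "i \<in> {1..r}"
    have "m i = 1 \<or> m i = -1" using key[OF i] by (rule pos_zmult_eq_1_iff_lemma[OF conjunct2])
    then show "\<sigma> i \<in> {1..r} \<and> (m i = 1 \<or> m i = -1) \<and> \<phi> (beta i) = E (\<lambda>l. if l = \<sigma> i then m i else 0)"
      using sm i by blast
  next
    show "inj_on \<sigma> {1..r}"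
    proof (rule inj_onI)
      fix a b assume "a \<in> {1..r}" "b \<in> {1..r}" "\<sigma> a = \<sigma> b"
      then show "a = b" using key by metis
    qed
  qed
qed

definition gk :: "(nat \<Rightarrow> nat) \<Rightarrow> (bool \<times> nat) word set" where
  "gk k = E (\<lambda>j. int (k j))"

lemma gk_carrier [simp]: "gk k \<in> carrier G" by (simp add: gk_def)

lemma foldr_prod_cong: "(\<And>i. i \<in> set l \<Longrightarrow> f i = g i) \<Longrightarrow>
   foldr (\<lambda>i acc. f i \<otimes> acc) l (\<one>::(bool \<times> nat) word set) = foldr (\<lambda>i acc. g i \<otimes> acc) l \<one>"
  by (induction l) auto

lemma gk_foldr: "gk k = foldr (\<lambda>i acc. beta i [^] int (k i) \<otimes> acc) ixs \<one>"
proof -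
  have "foldr (\<lambda>i acc. beta i [^] int (k i) \<otimes> acc) ixs \<one> =
        foldr (\<lambda>i acc. E (\<lambda>l. if l = i then int (k i) else 0) \<otimes> acc) ixs \<one>"
    by (rule foldr_prod_cong) (simp add: beta_int_pow)
  also have "\<dots> = E (\<lambda>j. \<Sum>i\<in>{1..r}. if j = i then int (k i) else 0)"
    by (subst E_foldr) simp_all
  also have "\<dots> = gk k" unfolding gk_def by (rule E_cong) simp
  finally show ?thesis by simp
qed

lemma hom_foldr:
  assumes "group_hom G G \<phi>" "\<And>i. i \<in> set l \<Longrightarrow> Xf i \<in> carrier G"
  shows "\<phi> (foldr (\<lambda>i acc. Xf i \<otimes> acc) l \<one>) = foldr (\<lambda>i acc. \<phi> (Xf i) \<otimes> acc) l \<one>"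
  using assms(2)
proof (induction l)
  case Nil then show ?case using assms(1) by (simp add: group_hom.hom_one)
next
  case (Cons a l)
  have c: "foldr (\<lambda>i acc. Xf i \<otimes> acc) l \<one> \<in> carrier G"
    using Cons.prems by (induction l) auto
  show ?case using Cons c assms(1) by (simp add: group_hom.hom_mult)
qed

definition inT :: "nat \<Rightarrow> (nat \<Rightarrow> nat) \<Rightarrow> bool" where
  "inT n k \<longleftrightarrow> (\<forall>i. (i \<in> {1..r} \<longrightarrow> i * (n + 1) \<le> k i \<and> k i \<le> i * (n + 1) + n) \<and> (i \<notin> {1..r} \<longrightarrow> k i = 0))"

lemma orbit_inj:
  assumes phi: "\<phi> \<in> iso G G" and eq: "\<phi> (gk k) = gk k'" and T: "inT n k" "inT n k'"
  shows "k = k'"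
proof -
  obtain \<sigma> m where sm: "\<And>i. i \<in> {1..r} \<Longrightarrow> \<sigma> i \<in> {1..r} \<and> (m i = 1 \<or> m i = (-1::int)) \<and>
        \<phi> (beta i) = E (\<lambda>l. if l = \<sigma> i then m i else 0)" and inj: "inj_on \<sigma> {1..r}"
    using aut_struct[OF phi] by blast
  interpret gh: group_hom G G \<phi>
    using phi by (intro group_hom.intro group_hom_axioms.intro is_group) (simp add: iso_iff)
  have "\<phi> (gk k) = foldr (\<lambda>i acc. \<phi> (beta i [^] int (k i)) \<otimes> acc) ixs \<one>"
    unfolding gk_foldr by (rule hom_foldr) (simp_all add: gh.group_hom_axioms)
  also have "\<dots> = foldr (\<lambda>i acc. E (\<lambda>l. if l = \<sigma> i then int (k i) * m i else 0) \<otimes> acc) ixs \<one>"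
    by (rule foldr_prod_cong) (simp add: gh.hom_int_pow sm E_delta_pow)
  also have "\<dots> = E (\<lambda>j. \<Sum>i\<in>{1..r}. if j = \<sigma> i then int (k i) * m i else 0)"
    by (subst E_foldr) simp_all
  finally have e: "E (\<lambda>j. \<Sum>i\<in>{1..r}. if j = \<sigma> i then int (k i) * m i else 0) = E (\<lambda>j. int (k' j))"
    using eq by (simp add: gk_def)
  have main: "\<sigma> i0 = i0 \<and> k' i0 = k i0" if i0: "i0 \<in> {1..r}" for i0
  proof -
    have s: "\<sigma> i0 \<in> {1..r}" "m i0 = 1 \<or> m i0 = -1" using sm i0 by auto
    have "(\<Sum>i\<in>{1..r}. if \<sigma> i0 = \<sigma> i then int (k i) * m i else 0) = int (k' (\<sigma> i0))"
      using E_eq[OF e s(1)] by simp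
    moreover have "(\<Sum>i\<in>{1..r}. if \<sigma> i0 = \<sigma> i then int (k i) * m i else 0) =
                   (\<Sum>i\<in>{1..r}. if i0 = i then int (k i) * m i else 0)"
      using inj i0 by (intro sum.cong) (auto dest: inj_onD)
    ultimately have km: "int (k i0) * m i0 = int (k' (\<sigma> i0))" using i0 by simp
    have kpos: "k i0 > 0" using T(1) i0 unfolding inT_def
      by (metis atLeastAtMost_iff le_trans less_one mult_le_mono1 not_le_imp_less order_trans Suc_eq_plus1 le_add2 mult_Suc nat_mult_1 le_zero_eq not_one_le_zero)
    have k'pos: "k' (\<sigma> i0) > 0" using T(2) s(1) unfolding inT_def
      by (metis atLeastAtMost_iff le_trans less_one mult_le_mono1 not_le_imp_less order_trans Suc_eq_plus1 le_add2 mult_Suc nat_mult_1 le_zero_eq not_one_le_zero)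
    have "m i0 = 1"
    proof (rule ccontr)
      assume "m i0 \<noteq> 1"
      then have "m i0 = -1" using s by simp
      then show False using km kpos k'pos by simp
    qed
    then have kk: "k' (\<sigma> i0) = k i0" using km by simp
    have "k i0 div (n + 1) = i0" using T(1) i0 unfolding inT_def by (intro div_block) auto
    moreover have "k' (\<sigma> i0) div (n + 1) = \<sigma> i0" using T(2) s(1) unfolding inT_def by (intro div_block) auto
    ultimately have "\<sigma> i0 = i0" using kk by simp
    then show ?thesis using kk by simp
  qed
  show ?thesis
  proof
    fix i show "k i = k' i"
      using main[of i] T unfolding inT_def by (cases "i \<in> {1..r}") auto
  qed
qed

end


locale DrS = Dr +
  fixes Sg :: "(bool \<times> nat) word set set"
  assumes finS: "finite Sg" and subS: "Sg \<subseteq> carrier G" and genS: "generate G Sg = carrier G"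
begin

definition Sg' where "Sg' = Sg \<union> m_inv G ` Sg"

definition prodl :: "(bool \<times> nat) word set list \<Rightarrow> (bool \<times> nat) word set" where
  "prodl xs = foldr (\<lambda>x y. x \<otimes> y) xs \<one>"

abbreviation wl where "wl g \<equiv> word_length G Sg g"

lemma Sg'_carrier: "Sg' \<subseteq> carrier G"
  using subS by (auto simp: Sg'_def)

lemma finite_Sg': "finite Sg'"
  using finS by (simp add: Sg'_def)

lemma prodl_Nil [simp]: "prodl [] = \<one>" by (simp add: prodl_def)
lemma prodl_Cons [simp]: "prodl (x # xs) = x \<otimes> prodl xs" by (simp add: prodl_def)

lemma prodl_carrier: "set xs \<subseteq> carrier G \<Longrightarrow> prodl xs \<in> carrier G"
  by (induction xs) auto

lemma prodl_append: "set xs \<subseteq> carrier G \<Longrightarrow> set ys \<subseteq> carrier G \<Longrightarrow> prodl (xs @ ys) = prodl xs \<otimes> prodl ys"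
  by (induction xs) (auto simp: m_assoc prodl_carrier)

lemma gen_word: "g \<in> generate G Sg \<Longrightarrow> \<exists>xs. set xs \<subseteq> Sg' \<and> prodl xs = g"
proof (induction rule: generate.induct)
  case one then show ?case by (intro exI[of _ "[]"]) simp
next
  case (incl h) then show ?case using subS by (intro exI[of _ "[h]"]) (auto simp: Sg'_def)
next
  case (inv h) then show ?case using subS by (intro exI[of _ "[inv h]"]) (auto simp: Sg'_def)
next
  case (eng h1 h2)
  then obtain xs ys where "set xs \<subseteq> Sg'" "prodl xs = h1" "set ys \<subseteq> Sg'" "prodl ys = h2" by blast
  then show ?case using Sg'_carrier by (intro exI[of _ "xs @ ys"]) (auto simp: prodl_append)
qed

lemma wl_def': "wl g = (LEAST n. \<exists>xs. length xs = n \<and> set xs \<subseteq> Sg' \<and> prodl xs = g)"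
  by (simp add: word_length_def Sg'_def prodl_def)

lemma wl_ex: "g \<in> carrier G \<Longrightarrow> \<exists>xs. length xs = wl g \<and> set xs \<subseteq> Sg' \<and> prodl xs = g"
proof -
  assume "g \<in> carrier G"
  then obtain xs where "set xs \<subseteq> Sg'" "prodl xs = g" using gen_word genS by blast
  then have "\<exists>n xs. length xs = n \<and> set xs \<subseteq> Sg' \<and> prodl xs = g" by blast
  then show ?thesis unfolding wl_def' by (rule LeastI_ex)
qed

lemma wl_le: "set xs \<subseteq> Sg' \<Longrightarrow> prodl xs = g \<Longrightarrow> wl g \<le> length xs"
  unfolding wl_def' by (rule Least_le) blast

definition nrm :: "elt \<Rightarrow> int" where "nrm p = (\<Sum>i\<in>{1..r}. \<bar>fst p i\<bar>)"

definition Cb :: int where "Cb = Max (insert 0 ((\<lambda>x. nrm (Phi x)) ` Sg'))"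

definition bnd :: "int \<Rightarrow> elt \<Rightarrow> bool" where "bnd m p \<longleftrightarrow> (\<forall>i. \<bar>fst p i\<bar> \<le> m)"

lemma Cb_nonneg: "0 \<le> Cb"
  unfolding Cb_def using finite_Sg' by (intro Max_ge) auto

lemma Cb_bound: "x \<in> Sg' \<Longrightarrow> bnd Cb (Phi x)"
proof -
  assume x: "x \<in> Sg'"
  have "nrm (Phi x) \<le> Cb" unfolding Cb_def using finite_Sg' x by (intro Max_ge) auto
  moreover have c: "Phi x \<in> carM r" using x Sg'_carrier by (intro PhiG_carM) auto
  have "\<bar>fst (Phi x) i\<bar> \<le> Cb" for i
  proof (cases "i \<in> {1..r}")
    case True
    then have "\<bar>fst (Phi x) i\<bar> \<le> nrm (Phi x)" unfolding nrm_def
      by (intro member_le_sum) auto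
    then show ?thesis using \<open>nrm (Phi x) \<le> Cb\<close> by simp
  next
    case False
    then show ?thesis using c Cb_nonneg by (simp add: carM_def)
  qed
  then show ?thesis by (simp add: bnd_def)
qed

lemma bnd_mulM: "bnd a p \<Longrightarrow> bnd b q \<Longrightarrow> bnd (a + b) (mulM p q)"
proof -
  assume "bnd a p" "bnd b q"
  then have "\<bar>fst p i\<bar> \<le> a" "\<bar>fst q i\<bar> \<le> b" for i by (auto simp: bnd_def)
  have "\<bar>fst p i + (if snd p i then - fst q i else fst q i)\<bar> \<le> a + b" for i
  proof -
    have "\<bar>fst p i + (if snd p i then - fst q i else fst q i)\<bar> \<le> \<bar>fst p i\<bar> + \<bar>fst q i\<bar>"
      by (cases "snd p i") (auto simp: abs_triangle_ineq abs_triangle_ineq4)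
    then show ?thesis using \<open>\<bar>fst p i\<bar> \<le> a\<close> \<open>\<bar>fst q i\<bar> \<le> b\<close> by linarith
  qed
  then show ?thesis unfolding bnd_def mulM_def by simp
qed

lemma prod_bnd: "set xs \<subseteq> Sg' \<Longrightarrow> bnd (Cb * int (length xs)) (Phi (prodl xs))"
proof (induction xs)
  case Nil then show ?case by (simp add: PhiG_one oneM_def bnd_def)
next
  case (Cons x xs)
  have c: "x \<in> carrier G" "prodl xs \<in> carrier G"
    using Cons.prems Sg'_carrier by (auto intro!: prodl_carrier)
  have "bnd (Cb + Cb * int (length xs)) (mulM (Phi x) (Phi (prodl xs)))"
    using Cons by (intro bnd_mulM Cb_bound) auto
  then show ?case using c by (simp add: PhiG_mult algebra_simps)
qed

lemma bnd_mono: "bnd a p \<Longrightarrow> a \<le> b \<Longrightarrow> bnd b p"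
  by (auto simp: bnd_def intro: order_trans)

definition Box :: "int \<Rightarrow> elt set" where "Box m = {p \<in> carM r. bnd m p}"

lemma ball_sub: "{g \<in> carrier G. wl g \<le> n} \<subseteq> Psi ` Box (Cb * int n)"
proof
  fix g assume "g \<in> {g \<in> carrier G. wl g \<le> n}"
  then have g: "g \<in> carrier G" "wl g \<le> n" by auto
  obtain xs where xs: "length xs = wl g" "set xs \<subseteq> Sg'" "prodl xs = g" using wl_ex g by blast
  have "bnd (Cb * int (length xs)) (Phi g)" using prod_bnd xs by blast
  then have "bnd (Cb * int n) (Phi g)" using g xs Cb_nonneg
    by (elim bnd_mono) (simp add: mult_left_mono)
  then have "Phi g \<in> Box (Cb * int n)" using g by (simp add: Box_def PhiG_carM)
  then show "g \<in> Psi ` Box (Cb * int n)" using g by (metis Psi_Phi image_eqI)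
qed

lemma Box_card: "finite (Box m) \<and> card (Box m) \<le> nat (2 * m + 1) ^ r * 2 ^ r"
proof -
  let ?A = "Pi\<^sub>E {1..r} (\<lambda>_. {-m..m})"
  let ?B = "Pi\<^sub>E {1..r} (\<lambda>_. UNIV :: bool set)"
  let ?F = "\<lambda>(f, e). ((\<lambda>i. if i \<in> {1..r} then f i else 0) :: nat \<Rightarrow> int, (\<lambda>i. if i \<in> {1..r} then e i else False))"
  have sub: "Box m \<subseteq> ?F ` (?A \<times> ?B)"
  proof
    fix p assume p: "p \<in> Box m"
    have "\<forall>i. \<bar>fst p i\<bar> \<le> m" using p by (simp add: Box_def bnd_def)
    then have "fst p i \<in> {-m..m}" for i by (metis abs_le_D1 abs_le_D2 atLeastAtMost_iff minus_le_iff)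
    then have pr: "(restrict (fst p) {1..r}, restrict (snd p) {1..r}) \<in> ?A \<times> ?B"
      by (auto simp: restrict_PiE_iff)
    have eqp: "?F (restrict (fst p) {1..r}, restrict (snd p) {1..r}) = p"
      using p by (auto simp: Box_def carM_def fun_eq_iff prod_eq_iff)
    show "p \<in> ?F ` (?A \<times> ?B)" by (rule image_eqI[where f = ?F, OF eqp[symmetric] pr])
  qed
  have fin: "finite (?A \<times> ?B)" by (auto intro!: finite_PiE)
  have "card (?A \<times> ?B) = nat (2 * m + 1) ^ r * 2 ^ r"
    by (simp add: card_cartesian_product card_PiE)
  moreover have "card (Box m) \<le> card (?A \<times> ?B)"
  proof -
    have "card (Box m) \<le> card (?F ` (?A \<times> ?B))" by (rule card_mono[OF finite_imageI[OF fin] sub])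
    also have "\<dots> \<le> card (?A \<times> ?B)" by (rule card_image_le[OF fin])
    finally show ?thesis .
  qed
  moreover have "finite (Box m)" by (rule finite_subset[OF sub finite_imageI[OF fin]])
  ultimately show ?thesis by simp
qed

lemma ag_eq: "aut_growth G Sg n = card (aut_orbit G ` {g \<in> carrier G. wl g \<le> n})"
  unfolding aut_growth_def by (rule arg_cong[of _ _ card]) blast

lemma ball_finite: "finite {g \<in> carrier G. wl g \<le> n}"
  using ball_sub Box_card by (meson finite_imageI finite_subset)

lemma ag_finite: "finite (aut_orbit G ` {g \<in> carrier G. wl g \<le> n})"
  using ball_finite by simp

lemma ag_upper: "aut_growth G Sg n \<le> nat (2 * (Cb * int n) + 1) ^ r * 2 ^ r"
proof -
  have "aut_growth G Sg n \<le> card {g \<in> carrier G. wl g \<le> n}"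
    unfolding ag_eq using ball_finite by (rule card_image_le)
  also have "\<dots> \<le> card (Psi ` Box (Cb * int n))"
    using ball_sub Box_card by (intro card_mono) auto
  also have "\<dots> \<le> card (Box (Cb * int n))" using Box_card by (intro card_image_le) auto
  also have "\<dots> \<le> nat (2 * (Cb * int n) + 1) ^ r * 2 ^ r" using Box_card by blast
  finally show ?thesis .
qed

lemma growth_upper: "growth_le (aut_growth G Sg) (\<lambda>n. n ^ r)"
proof -
  define c where "c = 2 ^ r * nat (2 * Cb + 1)"
  have c1: "nat (2 * Cb + 1) \<le> c" unfolding c_def by simp
  have c2: "2 ^ r \<le> c" unfolding c_def using Cb_nonneg by simp
  have cpos: "c > 0" unfolding c_def using Cb_nonneg by simp
  have "aut_growth G Sg n \<le> c * (c * n + c) ^ r + c" for n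
  proof -
    have "nat (2 * (Cb * int n) + 1) \<le> nat (2 * Cb + 1) * (n + 1)"
    proof -
      have "2 * (Cb * int n) + 1 \<le> (2 * Cb + 1) * (int n + 1)" using Cb_nonneg by (simp add: algebra_simps)
      then have "nat (2 * (Cb * int n) + 1) \<le> nat ((2 * Cb + 1) * (int n + 1))" by simp
      also have "\<dots> = nat (2 * Cb + 1) * nat (int n + 1)" using Cb_nonneg by (simp add: nat_mult_distrib)
      also have "nat (int n + 1) = n + 1" by (simp add: nat_int_add)
      finally show ?thesis .
    qed
    also have "\<dots> \<le> c * (n + 1)" using c1 by (intro mult_right_mono) auto
    finally have a: "nat (2 * (Cb * int n) + 1) \<le> c * n + c" by (simp add: algebra_simps)
    have "aut_growth G Sg n \<le> nat (2 * (Cb * int n) + 1) ^ r * 2 ^ r" by (rule ag_upper)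
    also have "\<dots> \<le> (c * n + c) ^ r * c" using a c2 by (intro mult_mono power_mono) auto
    also have "\<dots> \<le> c * (c * n + c) ^ r + c" by simp
    finally show ?thesis .
  qed
  then show ?thesis unfolding growth_le_def using cpos by blast
qed

end


context DrS
begin

lemma beta_alpha: "i \<in> {1..r} \<Longrightarrow> beta i = alpha i \<otimes> alpha i"
  by (intro Phi_inj) (auto simp: beta_def Phi_E PhiG_mult Phi_alpha mulM_def fun_eq_iff vE_def)

definition wd :: "nat \<Rightarrow> (bool \<times> nat) word set list" where
  "wd i = (SOME xs. set xs \<subseteq> Sg' \<and> prodl xs = alpha i)"

lemma wd: "i \<in> {1..r} \<Longrightarrow> set (wd i) \<subseteq> Sg' \<and> prodl (wd i) = alpha i"
proof -
  assume i: "i \<in> {1..r}"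
  then have "alpha i \<in> generate G Sg" using genS by simp
  then have "\<exists>xs. set xs \<subseteq> Sg' \<and> prodl xs = alpha i" by (rule gen_word)
  then show ?thesis unfolding wd_def by (rule someI_ex)
qed

definition Lmax :: nat where "Lmax = Max (insert 0 ((\<lambda>i. length (wd i)) ` {1..r}))"

lemma wd_len: "i \<in> {1..r} \<Longrightarrow> length (wd i) \<le> Lmax"
  unfolding Lmax_def by (intro Max_ge) auto

definition xsk :: "(nat \<Rightarrow> nat) \<Rightarrow> (bool \<times> nat) word set list" where
  "xsk k = concat (map (\<lambda>i. concat (replicate (2 * k i) (wd i))) ixs)"

lemma prodl_rep: "set ws \<subseteq> carrier G \<Longrightarrow> prodl (concat (replicate m ws)) = prodl ws [^] m"
proof (induction m)
  case 0 then show ?case by simp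
next
  case (Suc m)
  have "set (concat (replicate m ws)) \<subseteq> carrier G" using Suc.prems by auto
  then have "prodl (concat (replicate (Suc m) ws)) = prodl ws \<otimes> prodl (concat (replicate m ws))"
    using Suc.prems by (simp add: prodl_append)
  also have "\<dots> = prodl ws \<otimes> prodl ws [^] m" using Suc by simp
  also have "\<dots> = prodl ws [^] Suc m" by (rule nat_pow_Suc2[OF prodl_carrier[OF Suc.prems], symmetric])
  finally show ?case .
qed

lemma prodl_concat_map: "(\<And>i. i \<in> set l \<Longrightarrow> set (f i) \<subseteq> carrier G) \<Longrightarrow>
   prodl (concat (map f l)) = foldr (\<lambda>i acc. prodl (f i) \<otimes> acc) l \<one>"
proof (induction l)
  case Nil then show ?case by simp
next
  case (Cons a l)
  have "set (concat (map f l)) \<subseteq> carrier G" using Cons.prems by auto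
  then show ?case using Cons by (simp add: prodl_append)
qed

lemma wd_carrier: "i \<in> {1..r} \<Longrightarrow> set (wd i) \<subseteq> carrier G"
  using wd Sg'_carrier by blast

lemma gk_xsk: "gk k = prodl (xsk k)"
proof -
  have "prodl (xsk k) = foldr (\<lambda>i acc. prodl (concat (replicate (2 * k i) (wd i))) \<otimes> acc) ixs \<one>"
    unfolding xsk_def
  proof (rule prodl_concat_map)
    fix i assume "i \<in> set ixs"
    then show "set (concat (replicate (2 * k i) (wd i))) \<subseteq> carrier G"
      using wd_carrier[of i] by auto
  qed
  also have "\<dots> = foldr (\<lambda>i acc. beta i [^] int (k i) \<otimes> acc) ixs \<one>"
  proof (rule foldr_prod_cong)
    fix i assume "i \<in> set ixs"
    then have i: "i \<in> {1..r}" by simp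
    have "prodl (concat (replicate (2 * k i) (wd i))) = alpha i [^] (2 * k i)"
      using i wd[OF i] wd_carrier[OF i] by (simp add: prodl_rep)
    also have "\<dots> = (alpha i [^] (2::nat)) [^] k i" using i by (simp add: nat_pow_pow)
    also have "alpha i [^] (2::nat) = beta i" using i by (simp add: beta_alpha numeral_2_eq_2)
    also have "beta i [^] k i = beta i [^] int (k i)" by (simp add: int_pow_int)
    finally show "prodl (concat (replicate (2 * k i) (wd i))) = beta i [^] int (k i)" .
  qed
  also have "\<dots> = gk k" by (simp add: gk_foldr)
  finally show ?thesis by simp
qed

lemma set_xsk: "set (xsk k) \<subseteq> Sg'"
proof
  fix x assume "x \<in> set (xsk k)"
  then obtain i where i: "i \<in> set ixs" "x \<in> set (wd i)" by (auto simp: xsk_def split: if_splits)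
  then show "x \<in> Sg'" using wd[of i] by auto
qed

lemma length_ixs: "length ixs = r" by (simp add: ixs_def)

lemma len_xsk:
  assumes "\<And>i. i \<in> {1..r} \<Longrightarrow> k i \<le> K"
  shows "length (xsk k) \<le> r * (2 * K * Lmax)"
proof -
  have "length (xsk k) = (\<Sum>i\<leftarrow>ixs. 2 * k i * length (wd i))"
    unfolding xsk_def by (simp add: length_concat comp_def sum_list_replicate)
  also have "\<dots> \<le> (\<Sum>i\<leftarrow>ixs. 2 * K * Lmax)"
    using assms wd_len by (intro sum_list_mono) (simp add: mult_mono)
  also have "\<dots> = r * (2 * K * Lmax)" by (simp add: sum_list_triv length_ixs)
  finally show ?thesis .
qed

definition ext0 :: "(nat \<Rightarrow> nat) \<Rightarrow> nat \<Rightarrow> nat" where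
  "ext0 f = (\<lambda>i. if i \<in> {1..r} then f i else 0)"

abbreviation PT where "PT n \<equiv> Pi\<^sub>E {1..r} (\<lambda>i. {i * (n + 1) .. i * (n + 1) + n})"

lemma inT_ext0: "f \<in> PT n \<Longrightarrow> inT n (ext0 f)"
  by (auto simp: inT_def ext0_def PiE_iff)

lemma card_PT: "card (PT n) = (n + 1) ^ r"
  by (simp add: card_PiE)

lemma growth_lower: "growth_le (\<lambda>n. n ^ r) (aut_growth G Sg)"
proof -
  define c where "c = 2 * r * (r + 1) * Lmax + 1"
  have cpos: "c > 0" by (simp add: c_def)
  have "n ^ r \<le> aut_growth G Sg (c * n + c)" for n
  proof -
    let ?Q = "\<lambda>f. aut_orbit G (gk (ext0 f))"
    have inj: "inj_on ?Q (PT n)"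
    proof (rule inj_onI)
      fix f f' assume f: "f \<in> PT n" "f' \<in> PT n" "?Q f = ?Q f'"
      have "gk (ext0 f') \<in> aut_orbit G (gk (ext0 f'))"
        unfolding aut_orbit_def by (rule image_eqI[where x = "\<lambda>x. x"]) (simp_all add: iso_set_refl)
      then have "gk (ext0 f') \<in> aut_orbit G (gk (ext0 f))" using f(3) by simp
      then obtain \<phi> where phi: "\<phi> \<in> iso G G" and eq: "\<phi> (gk (ext0 f)) = gk (ext0 f')"
        unfolding aut_orbit_def by auto
      have "ext0 f = ext0 f'" by (rule orbit_inj[OF phi eq inT_ext0[OF f(1)] inT_ext0[OF f(2)]])
      show "f = f'"
      proof (rule PiE_ext[OF f(1) f(2)])
        fix i assume i: "i \<in> {1..r}"
        have "ext0 f i = ext0 f' i" using \<open>ext0 f = ext0 f'\<close> by simp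
        then show "f i = f' i" using i by (simp add: ext0_def)
      qed
    qed
    have sub: "?Q ` PT n \<subseteq> aut_orbit G ` {g \<in> carrier G. wl g \<le> c * n + c}"
    proof
      fix Ob assume "Ob \<in> ?Q ` PT n"
      then obtain f where f: "f \<in> PT n" "Ob = ?Q f" by blast
      have bound: "\<And>i. i \<in> {1..r} \<Longrightarrow> ext0 f i \<le> (r + 1) * (n + 1)"
      proof -
        fix i assume i: "i \<in> {1..r}"
        then have "ext0 f i \<le> i * (n + 1) + n" using inT_ext0[OF f(1)] by (simp add: inT_def)
        also have "\<dots> \<le> r * (n + 1) + (n + 1)" using i by (intro add_mono mult_right_mono) auto
        finally show "ext0 f i \<le> (r + 1) * (n + 1)" by (simp add: algebra_simps)
      qed
      have "wl (gk (ext0 f)) \<le> length (xsk (ext0 f))"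
        by (rule wl_le[OF set_xsk gk_xsk[symmetric]])
      also have "\<dots> \<le> r * (2 * ((r + 1) * (n + 1)) * Lmax)" by (rule len_xsk[OF bound])
      also have "\<dots> \<le> c * n + c" by (simp add: c_def algebra_simps)
      finally show "Ob \<in> aut_orbit G ` {g \<in> carrier G. wl g \<le> c * n + c}" using f by auto
    qed
    have "n ^ r \<le> (n + 1) ^ r" by (simp add: power_mono)
    also have "\<dots> = card (PT n)" by (rule card_PT[symmetric])
    also have "\<dots> \<le> card (aut_orbit G ` {g \<in> carrier G. wl g \<le> c * n + c})"
      using inj sub ag_finite by (rule card_inj_on_le)
    also have "\<dots> = aut_growth G Sg (c * n + c)" by (simp add: ag_eq)
    finally show ?thesis .
  qed
  then have "n ^ r \<le> c * aut_growth G Sg (c * n + c) + c" for n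
  proof -
    have "n ^ r \<le> 1 * aut_growth G Sg (c * n + c)" using \<open>\<And>n. n ^ r \<le> aut_growth G Sg (c * n + c)\<close> by simp
    also have "\<dots> \<le> c * aut_growth G Sg (c * n + c)" using cpos by (intro mult_right_mono) auto
    finally show ?thesis by simp
  qed
  then show ?thesis unfolding growth_le_def using cpos by blast
qed

lemma growth_main: "growth_equiv (aut_growth G Sg) (\<lambda>n. n ^ r)"
  by (simp add: growth_equiv_def growth_upper growth_lower)

end


theorem mainTheorem12:
  fixes r :: nat
  assumes "r \<ge> 1"
  shows "group (Gr r)
    \<and> virtually_abelian_rank (Gr r) r
    \<and> (\<forall>\<Sigma>. finite \<Sigma> \<and> \<Sigma> \<subseteq> carrier (Gr r) \<and> generate (Gr r) \<Sigma> = carrier (Gr r) \<longrightarrow>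
          growth_equiv (aut_growth (Gr r) \<Sigma>) (\<lambda>n. n ^ r))
    \<and> derived (Gr r) (carrier (Gr r)) =
        generate (Gr r) {gen_a r i \<otimes>\<^bsub>Gr r\<^esub> gen_a r i | i. i \<in> {1..r}}"
proof -
  interpret D: Dr "Gr r" r by (rule Dr.intro[OF group_Gr]) (simp add: Dr_axioms_def)
  have 1: "group (Gr r)" by (rule group_Gr)
  have 2: "virtually_abelian_rank (Gr r) r" by (rule D.virt_ab)
  have 3: "\<forall>\<Sigma>. finite \<Sigma> \<and> \<Sigma> \<subseteq> carrier (Gr r) \<and> generate (Gr r) \<Sigma> = carrier (Gr r) \<longrightarrow>
          growth_equiv (aut_growth (Gr r) \<Sigma>) (\<lambda>n. n ^ r)"
  proof (intro allI impI)
    fix \<Sigma> assume h: "finite \<Sigma> \<and> \<Sigma> \<subseteq> carrier (Gr r) \<and> generate (Gr r) \<Sigma> = carrier (Gr r)"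
    interpret S: DrS "Gr r" r \<Sigma>
      using h by (intro DrS.intro D.Dr_axioms DrS_axioms.intro) auto
    show "growth_equiv (aut_growth (Gr r) \<Sigma>) (\<lambda>n. n ^ r)" by (rule S.growth_main)
  qed
  have "{gen_a r i \<otimes>\<^bsub>Gr r\<^esub> gen_a r i | i. i \<in> {1..r}} = D.Ysq"
    by (simp add: D.Ysq_def D.gen_a_alpha)
  then have 4: "derived (Gr r) (carrier (Gr r)) =
        generate (Gr r) {gen_a r i \<otimes>\<^bsub>Gr r\<^esub> gen_a r i | i. i \<in> {1..r}}"
    by (simp add: D.derived_eq)
  show ?thesis using 1 2 3 4 by blast
qed


end
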